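(* With the notation of the context, let $\alpha_{\bullet,\bullet}=(\alpha_{i,j})_{1\le i\le m,1\le j\le n}$ be an integer matrix and $\mathcal{P}_{\alpha_{\bullet,\bullet}}=\{(V_1,\ldots,V_n)\in\mathcal{A}: \dim(V_j\cap\ker x^i)=\alpha_{i,j}\ \forall i,j\}$. The following are equivalent: (i) $\mathcal{A}_x\cap\mathcal{P}_{\alpha_{\bullet,\bullet}}\neq\emptyset$; (ii) $\mathcal{A}_x^s\cap\mathcal{P}_{\alpha_{\bullet,\bullet}}\neq\emptyset$; (iii) $\alpha_{\bullet,\bullet}$ satisfies, with $l_i=\dim\ker x^i$ ($l_0=0$) and the convention $\alpha_{0,j}=0$: (1) $0\le\alpha_{i,j}\le\alpha_{i',j'}$ whenever $i\le i'$, $j\le j'$, and $\alpha_{m,j}=k_j$ for all $j$; (2) $\alpha_{i',j'}-\alpha_{i'-1,j'}\le\alpha_{i,j}-\alpha_{i-1,j}\le\alpha_{1,j}$ whenever $2\le i\le i'$ and $j'\le j$; (3) $\alpha_{i,j}-\alpha_{i-1,j}\le l_i-l_{i-1}$ for $2\le i\le m$ and all $j$, and $\alpha_{1,j}\le l_1$ for all $j$.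
   Context: $\mathbb{K}$ is an algebraically closed field of characteristic zero. $A$ is a $d$-dimensional $\mathbb{K}$-vector space, $k_\bullet=(k_1\le\cdots\le k_n)$ with $k_i\in\{0,\ldots,d\}$, and $\mathcal{A}=\mathcal{F}_{k_\bullet}(A)$ is the variety of partial flags $V_1\subset\cdots\subset V_n\subset A$ with $\dim V_j=k_j$. $x\in\mathrm{End}(A)$ is nilpotent with nilpotency order $m$ (least $m$ with $x^m=0$), and $\mathcal{A}_x=\{(V_j)\in\mathcal{A}: x(V_j)\subset V_j\ \forall j\}$. $P\subset G=GL(A)$ is the parabolic subgroup stabilizing each $\ker x^i$; $s\in P$ is a semisimple element with $Z_G(s)$ a Levi subgroup of $P$ and $sxs^{-1}=qx$ for some $q\in\mathbb{K}^*$; $\mathcal{A}_x^s$ is the $s$-fixed point set of $\mathcal{A}_x$. Every $P$-orbit of $\mathcal{A}$ is of the form $\mathcal{P}_{\alpha_{\bullet,\bullet}}$. *)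

theory Defs
  imports "HOL-Analysis.Analysis" "HOL-Computational_Algebra.Polynomial"
begin

text \<open>A = K^d is modelled as the type 'a^'d, with d = CARD('d);
  endomorphisms of A are square matrices 'a^'d^'d acting by (*v).\<close>

definition matpow :: "'a::semiring_1^'d^'d \<Rightarrow> nat \<Rightarrow> 'a^'d^'d" where
  "matpow x i = (((**) x) ^^ i) (mat 1)"

definition kerpow :: "'a::field^'d^'d \<Rightarrow> nat \<Rightarrow> ('a^'d) set" where
  "kerpow x i = {v. matpow x i *v v = 0}"

definition nilp_order :: "'a::field^'d^'d \<Rightarrow> nat \<Rightarrow> bool" where
  "nilp_order x m \<longleftrightarrow> matpow x m = 0 \<and> (\<forall>i<m. matpow x i \<noteq> 0)"

definition flag_variety :: "nat \<Rightarrow> (nat \<Rightarrow> nat) \<Rightarrow> (nat \<Rightarrow> ('a::field^'d) set) set" where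
  "flag_variety n k = {V.
     (\<forall>j\<in>{1..n}. vec.subspace (V j) \<and> vec.dim (V j) = k j) \<and>
     (\<forall>j. 1 \<le> j \<and> j < n \<longrightarrow> V j \<subseteq> V (Suc j)) \<and>
     (\<forall>j. j \<notin> {1..n} \<longrightarrow> V j = {0})}"

definition stable_flags :: "nat \<Rightarrow> (nat \<Rightarrow> nat) \<Rightarrow> 'a::field^'d^'d \<Rightarrow> (nat \<Rightarrow> ('a^'d) set) set" where
  "stable_flags n k x = {V \<in> flag_variety n k. \<forall>j\<in>{1..n}. (\<lambda>v. x *v v) ` V j \<subseteq> V j}"

definition fixed_flags :: "'a::field^'d^'d \<Rightarrow> (nat \<Rightarrow> ('a^'d) set) set \<Rightarrow> (nat \<Rightarrow> ('a^'d) set) set" where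
  "fixed_flags g S = {V \<in> S. \<forall>j. (\<lambda>v. g *v v) ` V j = V j}"

definition GLA :: "('a::field^'d^'d) set" where
  "GLA = {g. invertible g}"

definition parabolic_of :: "'a::field^'d^'d \<Rightarrow> ('a^'d^'d) set" where
  "parabolic_of x = {g \<in> GLA. \<forall>i. (\<lambda>v. g *v v) ` kerpow x i = kerpow x i}"

text \<open>Levi subgroups of P (the stabiliser of the flag 0 = ker x^0 \<subseteq> ker x^1 \<subseteq> ... \<subseteq> ker x^m = A):
  stabilisers in GLA(A) of a splitting A = U_1 \<oplus> ... \<oplus> U_m adapted to the flag,
  i.e. ker x^i = ker x^(i-1) \<oplus> U_i for 1 \<le> i \<le> m.\<close>
definition levi_subgroup_of :: "'a::field^'d^'d \<Rightarrow> nat \<Rightarrow> ('a^'d^'d) set \<Rightarrow> bool" where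
  "levi_subgroup_of x m L \<longleftrightarrow>
    (\<exists>U :: nat \<Rightarrow> ('a^'d) set.
       (\<forall>i\<in>{1..m}. vec.subspace (U i) \<and> U i \<inter> kerpow x (i - 1) = {0} \<and>
                    {u + w | u w. u \<in> U i \<and> w \<in> kerpow x (i - 1)} = kerpow x i) \<and>
       L = {g \<in> GLA. \<forall>i\<in>{1..m}. (\<lambda>v. g *v v) ` U i = U i})"

definition centralizer :: "'a::field^'d^'d \<Rightarrow> ('a^'d^'d) set" where
  "centralizer s = {g \<in> GLA. g ** s = s ** g}"

definition semisimple_elt :: "'a::field^'d^'d \<Rightarrow> bool" where
  "semisimple_elt s \<longleftrightarrow> invertible s \<and>
     (\<exists>(Q::'a^'d^'d) (D::'a^'d^'d). invertible Q \<and> (\<forall>i j. i \<noteq> j \<longrightarrow> D $ i $ j = 0) \<and> s = Q ** D ** matrix_inv Q)"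

definition P_alpha :: "nat \<Rightarrow> (nat \<Rightarrow> nat) \<Rightarrow> 'a::field^'d^'d \<Rightarrow> nat \<Rightarrow> (nat \<Rightarrow> nat \<Rightarrow> int)
                        \<Rightarrow> (nat \<Rightarrow> ('a^'d) set) set" where
  "P_alpha n k x m \<alpha> = {V \<in> flag_variety n k.
      \<forall>i\<in>{1..m}. \<forall>j\<in>{1..n}. int (vec.dim (V j \<inter> kerpow x i)) = \<alpha> i j}"

end

theory Submission imports Defs begin

abbreviation ssum :: "('a::field^'d) set \<Rightarrow> ('a^'d) set \<Rightarrow> ('a^'d) set" where
  "ssum P Q \<equiv> {u + w | u w. u \<in> P \<and> w \<in> Q}"

lemma direct_dim:
  fixes P Q :: "('a::field^'d) set"
  assumes "vec.subspace P" "vec.subspace Q" "P \<inter> Q \<subseteq> {0}"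
  shows "vec.dim (ssum P Q) = vec.dim P + vec.dim Q"
proof -
  have "vec.dim (P \<inter> Q) = 0" using assms(3) vec.dim_eq_0 by blast
  moreover have "vec.dim (ssum P Q) + vec.dim (P \<inter> Q) = vec.dim P + vec.dim Q"
    using vec.dim_sums_Int[OF assms(1,2)] by simp
  ultimately show ?thesis by linarith
qed

lemma ext_between:
  fixes Y Z :: "('a::field^'d) set"
  assumes "vec.subspace Y" "vec.subspace Z" "Y \<subseteq> Z" "vec.dim Y \<le> c" "c \<le> vec.dim Z"
  shows "\<exists>W. vec.subspace W \<and> Y \<subseteq> W \<and> W \<subseteq> Z \<and> vec.dim W = c"
proof -
  obtain B where B: "B \<subseteq> Y" "vec.independent B" "Y \<subseteq> vec.span B" "card B = vec.dim Y"
    using vec.basis_exists by blast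
  obtain C where C: "B \<subseteq> C" "C \<subseteq> Z" "vec.independent C" "Z \<subseteq> vec.span C"
    using vec.maximal_independent_subset_extend[of B Z] B assms(3) by blast
  have fC: "finite C" using C(3) vec.finiteI_independent by blast
  have cC: "card C = vec.dim Z"
  proof -
    have "vec.dim C = card C" using vec.dim_eq_card_independent[OF C(3)] .
    moreover have "vec.dim C \<le> vec.dim Z" using vec.dim_subset[OF C(2)] .
    moreover have "vec.dim Z \<le> vec.dim (vec.span C)" using vec.dim_subset[OF C(4)] .
    ultimately show ?thesis using vec.dim_span[of C] by linarith
  qed
  have fB: "finite B" using B(2) vec.finiteI_independent by blast
  have "c - card B \<le> card (C - B)" using cC B(4) assms fC fB C(1) by (simp add: card_Diff_subset)
  then obtain E where E: "E \<subseteq> C - B" "card E = c - card B"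
    using obtain_subset_with_card_n by metis
  define D where "D = B \<union> E"
  have DC: "D \<subseteq> C" using E C(1) D_def by auto
  have iD: "vec.independent D" using vec.independent_mono[OF C(3) DC] .
  have fE: "finite E" using E fC finite_subset by blast
  have cD: "card D = c" unfolding D_def using E fB fE B(4) assms(4)
    by (subst card_Un_disjoint) auto
  show ?thesis
  proof (intro exI conjI)
    show "vec.subspace (vec.span D)" by simp
    show "Y \<subseteq> vec.span D" using B(3) vec.span_mono[of B D] D_def by auto
    show "vec.span D \<subseteq> Z" using vec.span_minimal[of D Z] DC C(2) assms(2) by auto
    show "vec.dim (vec.span D) = c" using vec.dim_span_eq_card_independent[OF iD] cD by simp
  qed
qed

lemma compl_exists:
  fixes P T :: "('a::field^'d) set"
  assumes "vec.subspace P" "vec.subspace T" "P \<subseteq> T"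
  shows "\<exists>Q. vec.subspace Q \<and> Q \<subseteq> T \<and> P \<inter> Q \<subseteq> {0} \<and> vec.dim P + vec.dim Q = vec.dim T"
proof -
  obtain B where B: "B \<subseteq> P" "vec.independent B" "P \<subseteq> vec.span B" "card B = vec.dim P"
    using vec.basis_exists by blast
  obtain C where C: "B \<subseteq> C" "C \<subseteq> T" "vec.independent C" "T \<subseteq> vec.span C"
    using vec.maximal_independent_subset_extend[of B T] B assms(3) by blast
  have fC: "finite C" using C(3) vec.finiteI_independent by blast
  have cC: "card C = vec.dim T"
  proof -
    have "vec.dim C = card C" using vec.dim_eq_card_independent[OF C(3)] .
    moreover have "vec.dim C \<le> vec.dim T" using vec.dim_subset[OF C(2)] .
    moreover have "vec.dim T \<le> vec.dim (vec.span C)" using vec.dim_subset[OF C(4)] .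
    ultimately show ?thesis using vec.dim_span[of C] by linarith
  qed
  define Q where "Q = vec.span (C - B)"
  have iCB: "vec.independent (C - B)" using vec.independent_mono[OF C(3)] by blast
  have dQ: "vec.dim Q = card (C - B)" unfolding Q_def using vec.dim_span_eq_card_independent[OF iCB] .
  have fB: "finite B" using fC C(1) finite_subset by blast
  have cCB: "card (C - B) = card C - card B" using card_Diff_subset[OF fB C(1)] .
  have cBC: "card B \<le> card C" using card_mono[OF fC C(1)] .
  have sQ: "vec.subspace Q" unfolding Q_def by simp
  have QT: "Q \<subseteq> T" unfolding Q_def using vec.span_minimal[of "C - B" T] C(2) assms(2) by auto
  have sPQ: "vec.subspace (ssum P Q)" using vec.subspace_sums[OF assms(1) sQ] .
  have "C \<subseteq> ssum P Q"
  proof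
    fix c assume "c \<in> C"
    show "c \<in> ssum P Q"
    proof (cases "c \<in> B")
      case True
      then have "c \<in> P" using B(1) by auto
      moreover have "0 \<in> Q" using sQ vec.subspace_0 by blast
      moreover have "c = c + 0" by simp
      ultimately show ?thesis by blast
    next
      case False
      then have "c \<in> Q" unfolding Q_def using \<open>c \<in> C\<close> vec.span_base by blast
      moreover have "0 \<in> P" using assms(1) vec.subspace_0 by blast
      moreover have "c = 0 + c" by simp
      ultimately show ?thesis by blast
    qed
  qed
  then have "vec.span C \<subseteq> ssum P Q" using vec.span_minimal[OF _ sPQ] by simp
  then have h1: "T \<subseteq> ssum P Q" using C(4) by (rule order_trans[rotated])
  have h2: "ssum P Q \<subseteq> T"
  proof
    fix z assume "z \<in> ssum P Q"
    then obtain u w where z: "z = u + w" "u \<in> P" "w \<in> Q" by blast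
    then have "u \<in> T" "w \<in> T" using assms(3) QT by auto
    then show "z \<in> T" using z(1) vec.subspace_add[OF assms(2)] by simp
  qed
  have eq: "ssum P Q = T" using subset_antisym[OF h2 h1] .
  have e0: "vec.dim (ssum P Q) + vec.dim (P \<inter> Q) = vec.dim P + vec.dim Q"
    by (rule vec.dim_sums_Int[OF assms(1) sQ])
  have e1: "vec.dim T + vec.dim (P \<inter> Q) = vec.dim P + vec.dim Q" using e0 unfolding eq .
  have e2: "vec.dim P + vec.dim Q = vec.dim T"
  proof -
    have "card B + (card C - card B) = card C" using cBC by simp
    then show ?thesis using dQ cCB cC B(4) by simp
  qed
  have "vec.dim (P \<inter> Q) = 0" using e1 e2 by simp
  then have i0: "P \<inter> Q \<subseteq> {0}" by (subst vec.dim_eq_0[symmetric])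
  show ?thesis by (intro exI[of _ Q] conjI sQ QT i0 e2)
qed

lemma indep_union:
  fixes S T :: "('a::field^'d) set"
  assumes "vec.independent S" "vec.independent T" "vec.span S \<inter> vec.span T \<subseteq> {0}"
  shows "vec.independent (S \<union> T)"
proof -
  have fS: "finite S" "finite T" using assms vec.finiteI_independent by blast+
  have "0 \<notin> S" "0 \<notin> T" using assms(1,2) vec.dependent_zero by blast+
  have disj: "S \<inter> T = {}"
  proof (rule ccontr)
    assume "S \<inter> T \<noteq> {}"
    then obtain v where v: "v \<in> S" "v \<in> T" by blast
    then have "v \<in> vec.span S \<inter> vec.span T" by (simp add: vec.span_base)
    then have "v = 0" using assms(3) by blast
    then show False using \<open>0 \<notin> S\<close> v by simp
  qed
  have c: "card (S \<union> T) = card S + card T" using card_Un_disjoint[OF fS disj] .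
  have "vec.dim (vec.span (S \<union> T)) = vec.dim (ssum (vec.span S) (vec.span T))"
    by (simp add: vec.span_Un)
  also have "\<dots> = vec.dim (vec.span S) + vec.dim (vec.span T)"
    by (rule direct_dim) (use assms(3) in auto)
  also have "\<dots> = card S + card T"
    by (simp add: vec.dim_eq_card_independent[OF assms(1)] vec.dim_eq_card_independent[OF assms(2)])
  finally have d: "vec.dim (vec.span (S \<union> T)) = card (S \<union> T)" using c by simp
  show ?thesis using vec.span_superset[of "S \<union> T"] fS d
    by (intro vec.card_le_dim_spanning[of "S \<union> T" "vec.span (S \<union> T)"]) auto
qed

lemma matpow_0[simp]: "matpow x 0 = mat 1" by (simp add: matpow_def)
lemma matpow_Suc: "matpow x (Suc i) = x ** matpow x i" by (simp add: matpow_def)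
lemma matpow_Suc2: "matpow x (Suc i) = matpow x i ** x"
  by (induction i) (simp_all add: matpow_Suc matrix_mul_assoc)

lemma kerpow_0: "kerpow (x::'a::field^'d^'d) 0 = {0}"
  by (auto simp: kerpow_def)

lemma kerpow_Suc_iff: "v \<in> kerpow (x::'a::field^'d^'d) (Suc i) \<longleftrightarrow> x *v v \<in> kerpow x i"
  by (simp add: kerpow_def matpow_Suc2 matrix_vector_mul_assoc[symmetric])

lemma kerpow_mono_Suc: "kerpow (x::'a::field^'d^'d) i \<subseteq> kerpow x (Suc i)"
  by (auto simp: kerpow_def matpow_Suc matrix_vector_mul_assoc[symmetric])

lemma kerpow_mono: "i \<le> j \<Longrightarrow> kerpow (x::'a::field^'d^'d) i \<subseteq> kerpow x j"
proof (induction j)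
  case 0 then show ?case by simp
next
  case (Suc j)
  then show ?case using kerpow_mono_Suc[of x j] by (cases "i = Suc j") auto
qed

lemma kerpow_subspace: "vec.subspace (kerpow (x::'a::field^'d^'d) i)"
  unfolding kerpow_def by (rule vec.subspace_kernel)

lemma kerpow_full: "matpow x m = 0 \<Longrightarrow> kerpow (x::'a::field^'d^'d) m = UNIV"
  by (auto simp: kerpow_def)

lemma x_kerpow: "v \<in> kerpow (x::'a::field^'d^'d) (Suc i) \<Longrightarrow> x *v v \<in> kerpow x i"
  using kerpow_Suc_iff by blast

lemma unipotent_invertible:
  fixes D :: "'a::field^'d^'d"
  assumes "\<And>v. D *v (D *v v) = 0"
  shows "invertible (mat 1 + D)"
proof -
  have "\<forall>v. (mat 1 + D) *v v = 0 \<longrightarrow> v = 0"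
  proof (intro allI impI)
    fix v assume h: "(mat 1 + D) *v v = 0"
    then have e: "v + D *v v = 0" by (simp add: matrix_vector_mult_add_rdistrib)
    then have "D *v (v + D *v v) = 0" by simp
    then have "D *v v = 0" using assms[of v] by (simp add: matrix_vector_right_distrib)
    then show "v = 0" using e by simp
  qed
  then show ?thesis using matrix_left_invertible_ker invertible_left_inverse by blast
qed

lemma inv_props:
  fixes s :: "'a::field^'d^'d"
  assumes "invertible s"
  shows "s ** matrix_inv s = mat 1 \<and> matrix_inv s ** s = mat 1"
  using assms unfolding invertible_def matrix_inv_def by (rule someI_ex)

lemma smult_mat_vec:
  fixes x :: "'a::field^'d^'d"
  shows "(\<chi> i j. q * x $ i $ j) *v w = q *s (x *v w)"
  by (simp add: matrix_vector_mult_def vec_eq_iff sum_distrib_left mult.assoc)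

lemma s_x_vec:
  fixes x s :: "'a::field^'d^'d"
  assumes "invertible s" "s ** x ** matrix_inv s = (\<chi> i j. q * x $ i $ j)"
  shows "s *v (x *v v) = q *s (x *v (s *v v))"
proof -
  have "s ** x = (s ** x ** matrix_inv s) ** s"
    using inv_props[OF assms(1)] by (simp add: matrix_mul_assoc[symmetric])
  then have "s ** x = (\<chi> i j. q * x $ i $ j) ** s" using assms(2) by simp
  then have "(s ** x) *v v = ((\<chi> i j. q * x $ i $ j) ** s) *v v" by simp
  then show ?thesis by (simp add: matrix_vector_mul_assoc[symmetric] smult_mat_vec)
qed

lemma mat1_nz: "(mat 1 :: 'a::field^'d^'d) \<noteq> 0"
proof
  assume "(mat 1 :: 'a::field^'d^'d) = 0"
  then have "(mat 1 :: 'a::field^'d^'d) $ undefined $ undefined = 0" by simp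
  then show False by (simp add: mat_def)
qed

locale setting =
  fixes x s :: "'a::field^'d^'d" and m :: nat and U :: "nat \<Rightarrow> ('a^'d) set" and q :: 'a
  assumes nil: "nilp_order x m"
  and U_sub: "\<And>i. i \<in> {1..m} \<Longrightarrow> vec.subspace (U i)"
  and U_int: "\<And>i. i \<in> {1..m} \<Longrightarrow> U i \<inter> kerpow x (i-1) = {0}"
  and U_sum: "\<And>i. i \<in> {1..m} \<Longrightarrow> ssum (U i) (kerpow x (i-1)) = kerpow x i"
  and L_eq: "centralizer s = {g \<in> GLA. \<forall>i\<in>{1..m}. (\<lambda>v. g *v v) ` U i = U i}"
  and s_inv: "invertible s"
  and s_K: "\<And>i. (\<lambda>v. s *v v) ` kerpow x i = kerpow x i"
  and s_x: "\<And>v. s *v (x *v v) = q *s (x *v (s *v v))"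
begin

abbreviation K where "K i \<equiv> kerpow x i"

lemma m_pos: "1 \<le> m"
  using nil mat1_nz[where 'a='a and 'd='d] unfolding nilp_order_def
  by (cases m) auto

lemma K_full: "K m = UNIV"
  using nil kerpow_full unfolding nilp_order_def by blast

lemma U_K: "i \<in> {1..m} \<Longrightarrow> U i \<subseteq> K i"
proof
  fix u assume i: "i \<in> {1..m}" and u: "u \<in> U i"
  have "0 \<in> K (i-1)" by (simp add: kerpow_def)
  moreover have "u = u + 0" by simp
  ultimately have "u \<in> ssum (U i) (K (i-1))" using u by blast
  then show "u \<in> K i" unfolding U_sum[OF i] .
qed

lemma U_0: "i \<in> {1..m} \<Longrightarrow> 0 \<in> U i"
  using U_sub vec.subspace_0 by blast

lemma U_disj: "i \<in> {1..m} \<Longrightarrow> t \<in> {1..m} \<Longrightarrow> t < i \<Longrightarrow> u \<in> U t \<Longrightarrow> u \<in> U i \<Longrightarrow> u = 0"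
proof -
  assume i: "i \<in> {1..m}" and t: "t \<in> {1..m}" "t < i" and u: "u \<in> U t" "u \<in> U i"
  have "u \<in> K t" using U_K[OF t(1)] u(1) by blast
  moreover have "t \<le> i - 1" using t by simp
  ultimately have "u \<in> K (i-1)" using kerpow_mono[of t "i-1" x] by blast
  then show "u = 0" using U_int[OF i] u(2) by blast
qed

lemma U_disj': "i \<in> {1..m} \<Longrightarrow> t \<in> {1..m} \<Longrightarrow> t \<noteq> i \<Longrightarrow> u \<in> U t \<Longrightarrow> u \<in> U i \<Longrightarrow> u = 0"
  using U_disj by (cases "t < i") (auto simp: not_less)

lemma dim_U: "i \<in> {1..m} \<Longrightarrow> vec.dim (U i) + vec.dim (K (i-1)) = vec.dim (K i)"
  using direct_dim[OF U_sub kerpow_subspace, of i x "i-1"] U_int U_sum by simp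

lemma commute_of_L:
  assumes "invertible g" "\<And>i. i \<in> {1..m} \<Longrightarrow> (\<lambda>v. g *v v) ` U i = U i"
  shows "g *v (s *v v) = s *v (g *v v)"
proof -
  have "g \<in> centralizer s" using L_eq assms by (simp add: GLA_def)
  then have "g ** s = s ** g" by (simp add: centralizer_def)
  then show ?thesis by (simp add: matrix_vector_mul_assoc)
qed

lemma L_of_commute:
  assumes "invertible g" "g ** s = s ** g" "i \<in> {1..m}"
  shows "(\<lambda>v. g *v v) ` U i = U i"
proof -
  have "g \<in> centralizer s" using assms by (simp add: centralizer_def GLA_def)
  then show ?thesis using L_eq assms(3) by simp
qed

lemma s_U: "i \<in> {1..m} \<Longrightarrow> (\<lambda>v. s *v v) ` U i = U i"
  using L_of_commute[OF s_inv refl] .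

lemma s_U_mem: "i \<in> {1..m} \<Longrightarrow> u \<in> U i \<Longrightarrow> s *v u \<in> U i"
  using s_U by blast

lemma s_K_mem: "v \<in> K i \<Longrightarrow> s *v v \<in> K i"
  using s_K by blast

end

lemma ssum_comm: "ssum P Q = ssum Q P"
  by (auto; metis add.commute)

lemma inv_image_eq:
  fixes g :: "'a::field^'d^'d"
  assumes "invertible g" "vec.subspace W" "(\<lambda>v. g *v v) ` W \<subseteq> W"
  shows "(\<lambda>v. g *v v) ` W = W"
proof -
  have inj: "inj ((*v) g)" using inj_matrix_vector_mult[OF assms(1)] .
  have d: "vec.dim ((*v) g ` W) = vec.dim W"
    by (rule vec.dim_image_eq[OF matrix_vector_mul_linear_gen]) (use inj in \<open>auto simp: inj_on_def inj_def\<close>)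
  have sub: "vec.subspace ((*v) g ` W)"
    by (rule vec.subspace_image[OF assms(2)])
  have "(*v) g ` W = W"
    using vec.subspace_dim_equal[OF sub assms(2)] assms(3) d by simp
  then show ?thesis by simp
qed

lemma matrix_construct:
  fixes B :: "('a::field^'d) set"
  assumes "vec.independent B"
  shows "matrix (vec.construct B f) *v v = vec.construct B f v"
  by (rule matrix_works[OF vec.linear_construct[OF assms]])

lemma eq_on_basis:
  fixes A C :: "'a::field^'d^'d"
  assumes "vec.span B = UNIV" "\<And>b. b \<in> B \<Longrightarrow> A *v b = C *v b"
  shows "A = C"
proof -
  have "\<And>v. A *v v = C *v v"
    by (rule vec.linear_eq_on[OF matrix_vector_mul_linear_gen matrix_vector_mul_linear_gen, of _ B])
       (use assms in auto)
  then show ?thesis by (simp add: matrix_eq)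
qed

context setting begin

lemma basis_family:
  assumes "\<And>t. t \<in> {1..m} \<Longrightarrow> F t \<subseteq> U t \<and> vec.independent (F t)"
  shows "\<exists>B. \<forall>t\<in>{1..m}. F t \<subseteq> B t \<and> B t \<subseteq> U t \<and> vec.independent (B t) \<and> vec.span (B t) = U t"
proof -
  have "\<forall>t\<in>{1..m}. \<exists>Bt. F t \<subseteq> Bt \<and> Bt \<subseteq> U t \<and> vec.independent Bt \<and> vec.span Bt = U t"
  proof
    fix t assume t: "t \<in> {1..m}"
    obtain Bt where Bt: "F t \<subseteq> Bt" "Bt \<subseteq> U t" "vec.independent Bt" "U t \<subseteq> vec.span Bt"
      using vec.maximal_independent_subset_extend[of "F t" "U t"] assms[OF t] by blast
    have "vec.span Bt \<subseteq> U t" using vec.span_minimal[OF Bt(2) U_sub[OF t]] .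
    then show "\<exists>Bt. F t \<subseteq> Bt \<and> Bt \<subseteq> U t \<and> vec.independent Bt \<and> vec.span Bt = U t"
      using Bt by blast
  qed
  then show ?thesis by (rule bchoice)
qed

lemma union_basis:
  assumes B: "\<forall>t\<in>{1..m}. B t \<subseteq> U t \<and> vec.independent (B t) \<and> vec.span (B t) = U t"
  shows "p \<le> m \<Longrightarrow> vec.independent (\<Union>t\<in>{1..p}. B t) \<and> vec.span (\<Union>t\<in>{1..p}. B t) = K p"
proof (induction p)
  case 0
  then show ?case by (simp add: kerpow_0 vec.span_empty vec.independent_empty)
next
  case (Suc p)
  let ?S = "\<Union>t\<in>{1..p}. B t"
  have IH: "vec.independent ?S" "vec.span ?S = K p" using Suc by auto
  have t: "Suc p \<in> {1..m}" using Suc.prems by simp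
  have Bt: "vec.independent (B (Suc p))" "vec.span (B (Suc p)) = U (Suc p)" using B t by auto
  have un: "(\<Union>t\<in>{1..Suc p}. B t) = ?S \<union> B (Suc p)"
    by (auto simp: atLeastAtMostSuc_conv)
  have int: "vec.span ?S \<inter> vec.span (B (Suc p)) \<subseteq> {0}"
    using IH(2) Bt(2) U_int[OF t] by auto
  have "vec.independent (?S \<union> B (Suc p))" by (rule indep_union[OF IH(1) Bt(1) int])
  moreover have "vec.span (?S \<union> B (Suc p)) = K (Suc p)"
  proof -
    have "vec.span (?S \<union> B (Suc p)) = ssum (K p) (U (Suc p))"
      unfolding vec.span_Un IH(2) Bt(2) ..
    also have "\<dots> = ssum (U (Suc p)) (K p)" by (rule ssum_comm)
    also have "\<dots> = K (Suc p)" using U_sum[OF t] by simp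
    finally show ?thesis .
  qed
  ultimately show ?case unfolding un by simp
qed

lemma global_basis:
  assumes B: "\<forall>t\<in>{1..m}. B t \<subseteq> U t \<and> vec.independent (B t) \<and> vec.span (B t) = U t"
  shows "vec.independent (\<Union>t\<in>{1..m}. B t) \<and> vec.span (\<Union>t\<in>{1..m}. B t) = UNIV"
  using union_basis[OF B, of m] K_full by simp

end

lemma span_pair0: "vec.span {0, u} = range (\<lambda>k. k *s (u::'a::field^'d))"
  by (simp add: vec.span_insert_0 vec.span_singleton)

context setting begin

lemma delta_props:
  assumes BB: "vec.independent BB" and fb: "f ` BB \<subseteq> {0, u}"
  shows "\<And>b. b \<in> BB \<Longrightarrow> matrix (vec.construct BB f) *v b = f b"
    and "\<And>v. \<exists>k. matrix (vec.construct BB f) *v v = k *s u"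
proof -
  fix b assume b: "b \<in> BB"
  have "matrix (vec.construct BB f) *v b = vec.construct BB f b" by (rule matrix_construct[OF BB])
  also have "\<dots> = f b" by (rule vec.construct_basis[OF BB b])
  finally show "matrix (vec.construct BB f) *v b = f b" .
next
  fix v
  have "vec.construct BB f v \<in> vec.span (f ` BB)" by (rule vec.construct_in_span[OF BB])
  also have "\<dots> \<subseteq> vec.span {0, u}" by (rule vec.span_mono[OF fb])
  finally have "vec.construct BB f v \<in> vec.span {u}" by (simp add: vec.span_insert_0)
  then obtain k where "vec.construct BB f v = k *s u" using vec.span_singleton[of u] by auto
  then show "\<exists>k. matrix (vec.construct BB f) *v v = k *s u"
    using matrix_construct[OF BB, of f v] by auto
qed

lemma D_in_U:
  fixes D :: "'a^'d^'d"
  assumes t: "t \<in> {1..m}" and Bt: "vec.span Bt = U t" and DB: "\<And>b. b \<in> Bt \<Longrightarrow> D *v b \<in> U t"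
    and v: "v \<in> U t"
  shows "D *v v \<in> U t"
proof -
  have "D *v v \<in> (*v) D ` vec.span Bt" using v Bt by simp
  also have "\<dots> = vec.span ((*v) D ` Bt)" by (rule vec.span_image[symmetric])
  also have "\<dots> \<subseteq> U t" using vec.span_minimal[OF _ U_sub[OF t]] DB by blast
  finally show ?thesis .
qed

lemma eigen:
  assumes i: "i \<in> {1..m}" and u: "u \<in> U i"
  shows "\<exists>\<mu>. s *v u = \<mu> *s u"
proof (rule ccontr)
  assume ne: "\<nexists>\<mu>. s *v u = \<mu> *s u"
  define w where "w = s *v u"
  have u0: "u \<noteq> 0"
  proof
    assume "u = 0" then have "s *v u = 0 *s u" by simp
    with ne show False by blast
  qed
  have wU: "w \<in> U i" unfolding w_def by (rule s_U_mem[OF i u])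
  have wns: "w \<notin> vec.span {u}"
  proof
    assume "w \<in> vec.span {u}"
    then obtain k where "w = k *s u" by (auto simp: vec.span_singleton)
    with ne w_def show False by blast
  qed
  have w0: "w \<noteq> 0"
  proof
    assume "w = 0" then have "w \<in> vec.span {u}" using vec.span_zero by simp
    with wns show False by blast
  qed
  have uw: "u \<noteq> w"
  proof
    assume "u = w" then have "w \<in> vec.span {u}" using vec.span_base[of u "{u}"] by simp
    with wns show False by blast
  qed
  have iu: "vec.independent {u}"
    using vec.independent_insertI[of u "{}"] u0 by (simp add: vec.span_empty vec.independent_empty)
  have iwu: "vec.independent {w, u}" using vec.independent_insertI[OF wns iu] .
  define F where "F t = (if t = i then {w, u} else {})" for t
  have hF: "\<And>t. t \<in> {1..m} \<Longrightarrow> F t \<subseteq> U t \<and> vec.independent (F t)"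
  proof -
    fix t assume t: "t \<in> {1..m}"
    show "F t \<subseteq> U t \<and> vec.independent (F t)"
    proof (cases "t = i")
      case True then show ?thesis using iwu wU u by (simp add: F_def)
    next
      case False then show ?thesis by (simp add: F_def vec.independent_empty)
    qed
  qed
  obtain B where B: "\<forall>t\<in>{1..m}. F t \<subseteq> B t \<and> B t \<subseteq> U t \<and> vec.independent (B t) \<and> vec.span (B t) = U t"
    using basis_family[OF hF] by blast
  define BB where "BB = (\<Union>t\<in>{1..m}. B t)"
  have B': "\<forall>t\<in>{1..m}. B t \<subseteq> U t \<and> vec.independent (B t) \<and> vec.span (B t) = U t"
    using B by blast
  have BB0: "vec.independent BB \<and> vec.span BB = UNIV" unfolding BB_def by (rule global_basis[OF B'])
  have BB: "vec.independent BB" "vec.span BB = UNIV" using BB0 by auto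
  have FBi: "F i \<subseteq> B i" using B i by blast
  have wuB: "w \<in> B i" "u \<in> B i" using FBi by (auto simp: F_def)
  have BiBB: "B i \<subseteq> BB" unfolding BB_def using i by blast
  define f where "f b = (if b = w then u else 0)" for b
  have fb: "f ` BB \<subseteq> {0, u}" by (auto simp: f_def)
  define D where "D = matrix (vec.construct BB f)"
  have Db: "\<And>b. b \<in> BB \<Longrightarrow> D *v b = f b" unfolding D_def by (rule delta_props(1)[OF BB(1) fb])
  have Dk: "\<And>v. \<exists>k. D *v v = k *s u" unfolding D_def by (rule delta_props(2)[OF BB(1) fb])
  have Du: "D *v u = 0"
  proof -
    have "D *v u = f u" using Db BiBB wuB(2) by blast
    then show ?thesis using uw by (simp add: f_def)
  qed
  have Dw: "D *v w = u"
  proof -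
    have "D *v w = f w" using Db BiBB wuB(1) by blast
    then show ?thesis by (simp add: f_def)
  qed
  have DD: "\<And>v. D *v (D *v v) = 0"
  proof -
    fix v obtain k where "D *v v = k *s u" using Dk by blast
    then show "D *v (D *v v) = 0" by (simp add: vector_scalar_commute Du)
  qed
  define g where "g = mat 1 + D"
  have ginv: "invertible g" unfolding g_def by (rule unipotent_invertible[OF DD])
  have gv: "\<And>v. g *v v = v + D *v v" by (simp add: g_def matrix_vector_mult_add_rdistrib)
  have gU: "\<And>t. t \<in> {1..m} \<Longrightarrow> (\<lambda>v. g *v v) ` U t = U t"
  proof -
    fix t assume t: "t \<in> {1..m}"
    have Bt: "B t \<subseteq> U t" "vec.span (B t) = U t" using B t by auto
    have BtBB: "B t \<subseteq> BB" unfolding BB_def using t by blast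
    have DB: "\<And>b. b \<in> B t \<Longrightarrow> D *v b \<in> U t"
    proof -
      fix b assume b: "b \<in> B t"
      then have bBB: "b \<in> BB" using BtBB by blast
      have bU: "b \<in> U t" using Bt(1) b by blast
      show "D *v b \<in> U t"
      proof (cases "b = w")
        case True
        have "t = i"
        proof (rule ccontr)
          assume ti: "t \<noteq> i"
          have "w \<in> U t" using bU True by simp
          then have "w = 0" using U_disj'[OF i t ti _ wU] by blast
          then show False using w0 by blast
        qed
        then show ?thesis using Db[OF bBB] True u by (simp add: f_def)
      next
        case False
        then show ?thesis using Db[OF bBB] U_0[OF t] by (simp add: f_def)
      qed
    qed
    have "(\<lambda>v. g *v v) ` U t \<subseteq> U t"
    proof
      fix z assume "z \<in> (\<lambda>v. g *v v) ` U t"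
      then obtain v where v: "v \<in> U t" "z = g *v v" by blast
      have "D *v v \<in> U t" by (rule D_in_U[OF t Bt(2) DB v(1)])
      then show "z \<in> U t" using v gv vec.subspace_add[OF U_sub[OF t]] by simp
    qed
    then show "(\<lambda>v. g *v v) ` U t = U t" by (rule inv_image_eq[OF ginv U_sub[OF t]])
  qed
  have "g *v (s *v u) = s *v (g *v u)" by (rule commute_of_L[OF ginv gU])
  moreover have "g *v (s *v u) = w + u" using gv Dw unfolding w_def by simp
  moreover have "s *v (g *v u) = w" using gv Du unfolding w_def by simp
  ultimately have "w + u = w" by simp
  then show False using u0 by simp
qed

lemma distinct_eig:
  assumes t: "t \<in> {1..m}" and p: "p \<in> {1..m}" and tp: "t < p"
    and u: "u \<in> U t" "u \<noteq> 0" and w: "w \<in> U p" "w \<noteq> 0"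
    and su: "s *v u = c *s u" and sw: "s *v w = c *s w"
  shows False
proof -
  have uw: "u \<noteq> w"
  proof
    assume "u = w" then have "u \<in> U p" using w by simp
    then have "u = 0" using U_disj[OF p t tp u(1)] by blast
    then show False using u(2) by blast
  qed
  have iu: "vec.independent {u}"
    using vec.independent_insertI[of u "{}"] u by (simp add: vec.span_empty vec.independent_empty)
  have iw: "vec.independent {w}"
    using vec.independent_insertI[of w "{}"] w by (simp add: vec.span_empty vec.independent_empty)
  define F where "F r = (if r = t then {u} else if r = p then {w} else {})" for r
  have hF: "\<And>r. r \<in> {1..m} \<Longrightarrow> F r \<subseteq> U r \<and> vec.independent (F r)"
  proof -
    fix r assume r: "r \<in> {1..m}"
    show "F r \<subseteq> U r \<and> vec.independent (F r)"
    proof (cases "r = t")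
      case True then show ?thesis using iu u by (simp add: F_def)
    next
      case False
      show ?thesis
      proof (cases "r = p")
        case True then show ?thesis using iw w tp by (simp add: F_def)
      next
        case False then show ?thesis using \<open>r \<noteq> t\<close> by (simp add: F_def vec.independent_empty)
      qed
    qed
  qed
  obtain B where B: "\<forall>r\<in>{1..m}. F r \<subseteq> B r \<and> B r \<subseteq> U r \<and> vec.independent (B r) \<and> vec.span (B r) = U r"
    using basis_family[OF hF] by blast
  have B': "\<forall>t\<in>{1..m}. B t \<subseteq> U t \<and> vec.independent (B t) \<and> vec.span (B t) = U t"
    using B by blast
  define BB where "BB = (\<Union>t\<in>{1..m}. B t)"
  have BB0: "vec.independent BB \<and> vec.span BB = UNIV" unfolding BB_def by (rule global_basis[OF B'])
  have BB: "vec.independent BB" "vec.span BB = UNIV" using BB0 by auto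
  have Ft: "F t \<subseteq> B t" using B t by blast
  have Fp: "F p \<subseteq> B p" using B p by blast
  have uB: "u \<in> BB"
  proof -
    have "u \<in> B t" using Ft by (simp add: F_def)
    then show ?thesis unfolding BB_def using t by blast
  qed
  have wB: "w \<in> BB"
  proof -
    have "w \<in> B p" using Fp tp by (simp add: F_def)
    then show ?thesis unfolding BB_def using p by blast
  qed
  define f where "f b = (if b = w then u else 0)" for b
  have fb: "f ` BB \<subseteq> {0, u}" by (auto simp: f_def)
  define D where "D = matrix (vec.construct BB f)"
  have Db: "\<And>b. b \<in> BB \<Longrightarrow> D *v b = f b" unfolding D_def by (rule delta_props(1)[OF BB(1) fb])
  have Dk: "\<And>v. \<exists>k. D *v v = k *s u" unfolding D_def by (rule delta_props(2)[OF BB(1) fb])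
  have Du: "D *v u = 0" using Db[OF uB] uw by (simp add: f_def)
  have Dw: "D *v w = u" using Db[OF wB] by (simp add: f_def)
  have DD: "\<And>v. D *v (D *v v) = 0"
  proof -
    fix v obtain k where "D *v v = k *s u" using Dk by blast
    then show "D *v (D *v v) = 0" by (simp add: vector_scalar_commute Du)
  qed
  define g where "g = mat 1 + D"
  have ginv: "invertible g" unfolding g_def by (rule unipotent_invertible[OF DD])
  have gv: "\<And>v. g *v v = v + D *v v" by (simp add: g_def matrix_vector_mult_add_rdistrib)
  have comm: "g ** s = s ** g"
  proof (rule eq_on_basis[OF BB(2)])
    fix b assume b: "b \<in> BB"
    then obtain r where r: "r \<in> {1..m}" "b \<in> B r" unfolding BB_def by blast
    have "B r \<subseteq> U r" using B' r(1) by blast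
    then have "b \<in> U r" using r(2) by blast
    then obtain \<mu> where mu: "s *v b = \<mu> *s b" using eigen[OF r(1)] by blast
    show "(g ** s) *v b = (s ** g) *v b"
    proof (cases "b = w")
      case True
      have "(g ** s) *v b = g *v (c *s w)"
        using True sw by (simp add: matrix_vector_mul_assoc[symmetric])
      also have "\<dots> = c *s (w + u)" by (simp add: vector_scalar_commute gv Dw)
      finally have 1: "(g ** s) *v b = c *s (w + u)" .
      have "(s ** g) *v b = s *v (w + u)"
        using True by (simp add: matrix_vector_mul_assoc[symmetric] gv Dw)
      also have "\<dots> = c *s w + c *s u" by (simp add: matrix_vector_right_distrib sw su)
      also have "\<dots> = c *s (w + u)" by (simp add: vec.scale_right_distrib)
      finally show ?thesis using 1 by simp
    next
      case False
      then have Db0: "D *v b = 0" using Db[OF b] by (simp add: f_def)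
      have "(g ** s) *v b = \<mu> *s b"
        using mu by (simp add: matrix_vector_mul_assoc[symmetric] vector_scalar_commute gv Db0)
      moreover have "(s ** g) *v b = \<mu> *s b"
        using mu by (simp add: matrix_vector_mul_assoc[symmetric] gv Db0)
      ultimately show ?thesis by simp
    qed
  qed
  have "(\<lambda>v. g *v v) ` U p = U p" by (rule L_of_commute[OF ginv comm p])
  then have "g *v w \<in> U p" using w by blast
  then have wu: "w + u \<in> U p" using gv Dw by simp
  have "(w + u) - w \<in> U p" by (rule vec.subspace_diff[OF U_sub[OF p] wu w(1)])
  then have "u \<in> U p" by simp
  then show False using U_disj[OF p t tp u(1)] u(2) by blast
qed

end

context setting begin

lemma K_split: "Suc p \<le> m \<Longrightarrow> v \<in> K (Suc p) \<Longrightarrow> \<exists>a k. v = a + k \<and> a \<in> U (Suc p) \<and> k \<in> K p"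
proof -
  assume p: "Suc p \<le> m" and v: "v \<in> K (Suc p)"
  have t: "Suc p \<in> {1..m}" using p by simp
  have "v \<in> ssum (U (Suc p)) (K p)" using U_sum[OF t] v by simp
  then show ?thesis by blast
qed

lemma eig_zero:
  "p \<le> m \<Longrightarrow> v \<in> K p \<Longrightarrow> s *v v = c *s v \<Longrightarrow>
   (\<forall>t\<in>{1..p}. \<forall>w\<in>U t. s *v w = c *s w \<longrightarrow> w = 0) \<Longrightarrow> v = 0"
proof (induction p arbitrary: v)
  case 0
  then show ?case by (simp add: kerpow_0)
next
  case (Suc p)
  have t: "Suc p \<in> {1..m}" using Suc.prems(1) by simp
  obtain a k where ak: "v = a + k" "a \<in> U (Suc p)" "k \<in> K p"
    using K_split[OF Suc.prems(1,2)] by blast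
  obtain \<mu> where mu: "s *v a = \<mu> *s a" using eigen[OF t ak(2)] by blast
  have skK: "s *v k \<in> K p" by (rule s_K_mem[OF ak(3)])
  have e: "\<mu> *s a + s *v k = c *s a + c *s k"
    using Suc.prems(3) ak(1) mu by (simp add: matrix_vector_right_distrib vec.scale_right_distrib)
  have e2: "(\<mu> - c) *s a = c *s k - s *v k"
  proof -
    have "(\<mu> - c) *s a = \<mu> *s a - c *s a" by (simp add: vec.scale_left_diff_distrib)
    also have "\<dots> = c *s k - s *v k" using e by (simp add: algebra_simps)
    finally show ?thesis .
  qed
  have inU: "(\<mu> - c) *s a \<in> U (Suc p)" by (rule vec.subspace_scale[OF U_sub[OF t] ak(2)])
  have inK: "c *s k - s *v k \<in> K p"
    by (rule vec.subspace_diff[OF kerpow_subspace vec.subspace_scale[OF kerpow_subspace ak(3)] skK])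
  have "(\<mu> - c) *s a \<in> U (Suc p) \<inter> K (Suc p - 1)" using inU inK e2 by simp
  then have z: "(\<mu> - c) *s a = 0" using U_int[OF t] by blast
  have a0: "a = 0"
  proof (rule ccontr)
    assume "a \<noteq> 0"
    then have "\<mu> = c" using z by simp
    then have "s *v a = c *s a" using mu by simp
    then show False using Suc.prems(4) ak(2) \<open>a \<noteq> 0\<close> by auto
  qed
  have "s *v k = c *s k" using Suc.prems(3) ak(1) a0 by simp
  moreover have "\<forall>t\<in>{1..p}. \<forall>w\<in>U t. s *v w = c *s w \<longrightarrow> w = 0" using Suc.prems(4) by auto
  ultimately have "k = 0" using Suc.IH[OF _ ak(3)] Suc.prems(1) by simp
  then show ?case using ak(1) a0 by simp
qed

lemma x_U1: "u \<in> U 1 \<Longrightarrow> x *v u = 0"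
proof -
  assume "u \<in> U 1"
  then have "u \<in> K (Suc 0)" using U_K[of 1] m_pos by auto
  then have "x *v u \<in> K 0" using kerpow_Suc_iff by blast
  then show ?thesis by (simp add: kerpow_0)
qed

lemma x_inj: "i \<in> {2..m} \<Longrightarrow> u \<in> U i \<Longrightarrow> x *v u = 0 \<Longrightarrow> u = 0"
proof -
  assume i: "i \<in> {2..m}" and u: "u \<in> U i" and xu: "x *v u = 0"
  have i1: "i \<in> {1..m}" using i by simp
  have "u \<in> K (Suc 0)" using xu kerpow_Suc_iff[of u x 0] by (simp add: kerpow_0)
  moreover have "Suc 0 \<le> i - 1" using i by auto
  ultimately have "u \<in> K (i - 1)" using kerpow_mono by blast
  then show "u = 0" using U_int[OF i1] u by blast
qed

lemma x_U:
  assumes i: "i \<in> {2..m}" and u: "u \<in> U i"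
  shows "x *v u \<in> U (i-1)"
proof -
  obtain j where j: "i = Suc (Suc j)" using i by (cases i; cases "i - 1") auto
  have ii: "i \<in> {1..m}" using i by simp
  have tj: "Suc j \<in> {1..m}" using i j by simp
  show ?thesis
  proof (cases "u = 0")
    case True
    then show ?thesis using U_0[OF tj] j by simp
  next
    case False
    obtain \<mu> where mu: "s *v u = \<mu> *s u" using eigen[OF ii u] by blast
    have "u \<in> K (Suc (Suc j))" using U_K[OF ii] u j by blast
    then have xuK: "x *v u \<in> K (Suc j)" using kerpow_Suc_iff by blast
    obtain w k where wk: "x *v u = w + k" "w \<in> U (Suc j)" "k \<in> K j"
      using K_split[OF _ xuK] tj by auto
    obtain \<nu> where nu: "s *v w = \<nu> *s w" using eigen[OF tj wk(2)] by blast
    have sxu: "s *v (x *v u) = (q * \<mu>) *s (x *v u)"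
      using s_x[of u] mu by (simp add: vector_scalar_commute)
    have skK: "s *v k \<in> K j" by (rule s_K_mem[OF wk(3)])
    have e: "\<nu> *s w + s *v k = (q * \<mu>) *s w + (q * \<mu>) *s k"
      using sxu wk(1) nu by (simp add: matrix_vector_right_distrib vec.scale_right_distrib)
    have e2: "((q * \<mu>) - \<nu>) *s w = s *v k - (q * \<mu>) *s k"
    proof -
      have "((q * \<mu>) - \<nu>) *s w = (q * \<mu>) *s w - \<nu> *s w" by (simp add: vec.scale_left_diff_distrib)
      also have "\<dots> = s *v k - (q * \<mu>) *s k" using e by (simp add: algebra_simps)
      finally show ?thesis .
    qed
    have inU: "((q * \<mu>) - \<nu>) *s w \<in> U (Suc j)" by (rule vec.subspace_scale[OF U_sub[OF tj] wk(2)])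
    have inK: "s *v k - (q * \<mu>) *s k \<in> K j"
      by (rule vec.subspace_diff[OF kerpow_subspace skK vec.subspace_scale[OF kerpow_subspace wk(3)]])
    have "((q * \<mu>) - \<nu>) *s w \<in> U (Suc j) \<inter> K (Suc j - 1)" using inU inK e2 by simp
    then have z: "((q * \<mu>) - \<nu>) *s w = 0" using U_int[OF tj] by blast
    have w0: "w \<noteq> 0"
    proof
      assume "w = 0"
      then have "x *v u \<in> K j" using wk by simp
      then have "u \<in> K (Suc j)" using kerpow_Suc_iff by blast
      then have "u \<in> K (i - 1)" using j by simp
      then have "u = 0" using U_int[OF ii] u by blast
      then show False using False by blast
    qed
    then have qn: "q * \<mu> = \<nu>" using z by simp
    have sk: "s *v k = \<nu> *s k" using e2 z qn by simp
    have hyp: "\<forall>t\<in>{1..j}. \<forall>w'\<in>U t. s *v w' = \<nu> *s w' \<longrightarrow> w' = 0"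
    proof (intro ballI impI)
      fix t w' assume t: "t \<in> {1..j}" and w': "w' \<in> U t" and sw': "s *v w' = \<nu> *s w'"
      show "w' = 0"
      proof (rule ccontr)
        assume "w' \<noteq> 0"
        have tm: "t \<in> {1..m}" using t tj by auto
        have "t < Suc j" using t by simp
        show False by (rule distinct_eig[OF tm tj \<open>t < Suc j\<close> w' \<open>w' \<noteq> 0\<close> wk(2) w0 sw' nu])
      qed
    qed
    have "k = 0" by (rule eig_zero[OF _ wk(3) sk hyp]) (use tj in simp)
    then show ?thesis using wk j by simp
  qed
qed

lemma s_W:
  assumes i: "i \<in> {1..m}" and W: "vec.subspace W" "W \<subseteq> U i"
  shows "(\<lambda>v. s *v v) ` W = W"
proof (rule inv_image_eq[OF s_inv W(1)])
  show "(\<lambda>v. s *v v) ` W \<subseteq> W"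
  proof
    fix z assume "z \<in> (\<lambda>v. s *v v) ` W"
    then obtain w where w: "w \<in> W" "z = s *v w" by blast
    then obtain \<mu> where "s *v w = \<mu> *s w" using eigen[OF i] W(2) by blast
    then show "z \<in> W" using w vec.subspace_scale[OF W(1)] by simp
  qed
qed

end

lemma chain_ext:
  fixes Y :: "nat \<Rightarrow> ('a::field^'d) set" and Uv :: "('a^'d) set" and c :: "nat \<Rightarrow> nat"
  assumes Uv: "vec.subspace Uv"
   and Yp: "\<And>j. j \<in> {1..n} \<Longrightarrow> vec.subspace (Y j) \<and> Y j \<subseteq> Uv \<and> vec.dim (Y j) \<le> c j \<and> c j \<le> vec.dim Uv"
   and Yn: "\<And>j. 1 \<le> j \<Longrightarrow> j < n \<Longrightarrow> Y j \<subseteq> Y (Suc j) \<and> c j \<le> c (Suc j)"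
  shows "\<exists>Z. \<forall>j\<in>{1..n}. vec.subspace (Z j) \<and> Y j \<subseteq> Z j \<and> Z j \<subseteq> Uv \<and> vec.dim (Z j) = c j
                          \<and> (j < n \<longrightarrow> Z j \<subseteq> Z (Suc j))"
proof -
  define P where "P Z j \<longleftrightarrow> vec.subspace (Z j) \<and> Y j \<subseteq> Z j \<and> Z j \<subseteq> Uv \<and> vec.dim (Z j) = c j
                          \<and> (j < n \<longrightarrow> Z j \<subseteq> Z (Suc j))" for Z j
  have main: "r \<le> n \<Longrightarrow> \<exists>Z. \<forall>j. n - r < j \<longrightarrow> j \<le> n \<longrightarrow> P Z j" for r
  proof (induction r)
    case 0
    then show ?case by auto
  next
    case (Suc r)
    then obtain Z where Z: "\<forall>j. n - r < j \<longrightarrow> j \<le> n \<longrightarrow> P Z j" by auto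
    define j0 where "j0 = n - r"
    have j0: "j0 \<in> {1..n}" using Suc.prems j0_def by auto
    have Yj0: "vec.subspace (Y j0)" "Y j0 \<subseteq> Uv" "vec.dim (Y j0) \<le> c j0" "c j0 \<le> vec.dim Uv"
      using Yp[OF j0] by auto
    obtain W where W: "vec.subspace W" "Y j0 \<subseteq> W" "W \<subseteq> Uv" "vec.dim W = c j0"
                      "j0 < n \<longrightarrow> W \<subseteq> Z (Suc j0)"
    proof (cases "r = 0")
      case True
      then have "j0 = n" using j0_def by simp
      obtain W where "vec.subspace W" "Y j0 \<subseteq> W" "W \<subseteq> Uv" "vec.dim W = c j0"
        using ext_between[OF Yj0(1) Uv Yj0(2,3,4)] by blast
      then show ?thesis using that \<open>j0 = n\<close> by blast
    next
      case False
      then have lt: "j0 < n" using j0_def Suc.prems by simp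
      have PZ: "P Z (Suc j0)" using Z lt j0_def False by auto
      then have Zs: "vec.subspace (Z (Suc j0))" "Y (Suc j0) \<subseteq> Z (Suc j0)" "Z (Suc j0) \<subseteq> Uv"
          "vec.dim (Z (Suc j0)) = c (Suc j0)" unfolding P_def by auto
      have "1 \<le> j0" using j0 by simp
      then have yy: "Y j0 \<subseteq> Y (Suc j0)" "c j0 \<le> c (Suc j0)" using Yn lt by auto
      obtain W where "vec.subspace W" "Y j0 \<subseteq> W" "W \<subseteq> Z (Suc j0)" "vec.dim W = c j0"
        using ext_between[OF Yj0(1) Zs(1), of "c j0"] yy Zs Yj0 by auto
      then show ?thesis using that Zs(3) by blast
    qed
    define Z' where "Z' = Z(j0 := W)"
    have "\<forall>j. n - Suc r < j \<longrightarrow> j \<le> n \<longrightarrow> P Z' j"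
    proof (intro allI impI)
      fix j assume j: "n - Suc r < j" "j \<le> n"
      show "P Z' j"
      proof (cases "j = j0")
        case True
        have "Z' (Suc j0) = Z (Suc j0)" by (simp add: Z'_def)
        then show ?thesis using True W unfolding P_def Z'_def by auto
      next
        case False
        then have "n - r < j" using j j0_def by auto
        then have "P Z j" using Z j by auto
        moreover have "Z' j = Z j" using False by (simp add: Z'_def)
        moreover have "Z' (Suc j) = Z (Suc j)"
          using False j \<open>n - r < j\<close> j0_def by (simp add: Z'_def)
        ultimately show ?thesis unfolding P_def by simp
      qed
    qed
    then show ?case by blast
  qed
  obtain Z where "\<forall>j. n - n < j \<longrightarrow> j \<le> n \<longrightarrow> P Z j" using main[of n] by auto
  then have "\<forall>j\<in>{1..n}. P Z j" by auto
  then show ?thesis unfolding P_def by blast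
qed

context setting begin

lemma x_image_props:
  assumes i: "i \<in> {2..m}" and W: "vec.subspace W" "W \<subseteq> U i"
  shows "vec.subspace ((\<lambda>v. x *v v) ` W) \<and> (\<lambda>v. x *v v) ` W \<subseteq> U (i-1)
         \<and> vec.dim ((\<lambda>v. x *v v) ` W) = vec.dim W"
proof (intro conjI)
  show "vec.subspace ((\<lambda>v. x *v v) ` W)" using vec.subspace_image[OF W(1), of x] by simp
  show "(\<lambda>v. x *v v) ` W \<subseteq> U (i-1)" using x_U[OF i] W(2) by blast
  have inj: "inj_on ((*v) x) (vec.span W)"
  proof (rule vec.linear_inj_on_iff_eq_0[OF matrix_vector_mul_linear_gen, THEN iffD2])
    show "\<forall>a\<in>vec.span W. x *v a = 0 \<longrightarrow> a = 0"
    proof (intro ballI impI)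
      fix a assume a: "a \<in> vec.span W" "x *v a = 0"
      have "vec.span W = W" using W(1) by simp
      then have "a \<in> U i" using a(1) W(2) by blast
      then show "a = 0" using x_inj[OF i] a(2) by blast
    qed
  qed simp
  have "vec.dim ((*v) x ` W) = vec.dim W" by (rule vec.dim_image_eq[OF matrix_vector_mul_linear_gen inj])
  then show "vec.dim ((\<lambda>v. x *v v) ` W) = vec.dim W" by simp
qed

lemma rows_exist:
  fixes a :: "nat \<Rightarrow> nat \<Rightarrow> nat"
  assumes A1: "\<And>i j. i \<in> {1..m} \<Longrightarrow> j \<in> {1..n} \<Longrightarrow> a i j \<le> vec.dim (U i)"
    and A2: "\<And>i j. i \<in> {1..m} \<Longrightarrow> Suc i \<le> m \<Longrightarrow> j \<in> {1..n} \<Longrightarrow> a (Suc i) j \<le> a i j"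
    and A3: "\<And>i j. i \<in> {1..m} \<Longrightarrow> 1 \<le> j \<Longrightarrow> j < n \<Longrightarrow> a i j \<le> a i (Suc j)"
  shows "\<exists>W. \<forall>i\<in>{1..m}. \<forall>j\<in>{1..n}. vec.subspace (W i j) \<and> W i j \<subseteq> U i \<and> vec.dim (W i j) = a i j
            \<and> (j < n \<longrightarrow> W i j \<subseteq> W i (Suc j))
            \<and> (i < m \<longrightarrow> (\<lambda>v. x *v v) ` W (Suc i) j \<subseteq> W i j)"
proof -
  define P where "P W i \<longleftrightarrow> (\<forall>j\<in>{1..n}. vec.subspace (W i j) \<and> W i j \<subseteq> U i \<and> vec.dim (W i j) = a i j
            \<and> (j < n \<longrightarrow> W i j \<subseteq> W i (Suc j))
            \<and> (i < m \<longrightarrow> (\<lambda>v. x *v v) ` W (Suc i) j \<subseteq> W i j))" for W :: "nat \<Rightarrow> nat \<Rightarrow> ('a^'d) set" and i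
  have main: "r \<le> m \<Longrightarrow> \<exists>W. \<forall>i. m - r < i \<longrightarrow> i \<le> m \<longrightarrow> P W i" for r
  proof (induction r)
    case 0
    then show ?case by auto
  next
    case (Suc r)
    then obtain W where W: "\<forall>i. m - r < i \<longrightarrow> i \<le> m \<longrightarrow> P W i" by auto
    define i0 where "i0 = m - r"
    have i0: "i0 \<in> {1..m}" using Suc.prems i0_def by auto
    define Y where "Y j = (if r = 0 then {0} else (\<lambda>v. x *v v) ` W (Suc i0) j)" for j
    have Yp: "\<And>j. j \<in> {1..n} \<Longrightarrow> vec.subspace (Y j) \<and> Y j \<subseteq> U i0 \<and> vec.dim (Y j) \<le> a i0 j
                  \<and> a i0 j \<le> vec.dim (U i0)"
    proof -
      fix j assume j: "j \<in> {1..n}"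
      show "vec.subspace (Y j) \<and> Y j \<subseteq> U i0 \<and> vec.dim (Y j) \<le> a i0 j \<and> a i0 j \<le> vec.dim (U i0)"
      proof (cases "r = 0")
        case True
        then show ?thesis using A1[OF i0 j] U_0[OF i0] by (simp add: Y_def)
      next
        case False
        then have si: "Suc i0 \<in> {2..m}" using i0_def Suc.prems by auto
        have "P W (Suc i0)" using W i0_def False Suc.prems by auto
        then have Wp: "vec.subspace (W (Suc i0) j)" "W (Suc i0) j \<subseteq> U (Suc i0)"
          "vec.dim (W (Suc i0) j) = a (Suc i0) j" using j unfolding P_def by auto
        have xi: "vec.subspace (Y j) \<and> Y j \<subseteq> U i0 \<and> vec.dim (Y j) = a (Suc i0) j"
          using x_image_props[OF si Wp(1,2)] Wp(3) False by (simp add: Y_def)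
        have "a (Suc i0) j \<le> a i0 j" using A2[OF i0 _ j] si by simp
        then show ?thesis using xi A1[OF i0 j] by simp
      qed
    qed
    have Yn: "\<And>j. 1 \<le> j \<Longrightarrow> j < n \<Longrightarrow> Y j \<subseteq> Y (Suc j) \<and> a i0 j \<le> a i0 (Suc j)"
    proof -
      fix j assume j: "1 \<le> j" "j < n"
      have "a i0 j \<le> a i0 (Suc j)" using A3[OF i0 j] .
      moreover have "Y j \<subseteq> Y (Suc j)"
      proof (cases "r = 0")
        case True then show ?thesis by (simp add: Y_def)
      next
        case False
        have "P W (Suc i0)" using W i0_def False Suc.prems by auto
        then have "W (Suc i0) j \<subseteq> W (Suc i0) (Suc j)" using j unfolding P_def by auto
        then show ?thesis using False by (auto simp: Y_def)
      qed
      ultimately show "Y j \<subseteq> Y (Suc j) \<and> a i0 j \<le> a i0 (Suc j)" by simp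
    qed
    obtain Z where Z: "\<forall>j\<in>{1..n}. vec.subspace (Z j) \<and> Y j \<subseteq> Z j \<and> Z j \<subseteq> U i0 \<and> vec.dim (Z j) = a i0 j
                          \<and> (j < n \<longrightarrow> Z j \<subseteq> Z (Suc j))"
      using chain_ext[where Uv="U i0" and Y=Y and c="a i0" and n=n, OF U_sub[OF i0] Yp Yn] by blast
    define W' where "W' = W(i0 := Z)"
    have "\<forall>i. m - Suc r < i \<longrightarrow> i \<le> m \<longrightarrow> P W' i"
    proof (intro allI impI)
      fix i assume i: "m - Suc r < i" "i \<le> m"
      show "P W' i"
      proof (cases "i = i0")
        case True
        have Wi0: "W' i0 = Z" by (simp add: W'_def)
        have "\<forall>j\<in>{1..n}. i0 < m \<longrightarrow> (\<lambda>v. x *v v) ` W' (Suc i0) j \<subseteq> Z j"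
        proof (intro ballI impI)
          fix j assume j: "j \<in> {1..n}" and lt: "i0 < m"
          then have "r \<noteq> 0" using i0_def by auto
          then have "(\<lambda>v. x *v v) ` W (Suc i0) j = Y j" by (simp add: Y_def)
          moreover have "W' (Suc i0) = W (Suc i0)" by (simp add: W'_def)
          ultimately show "(\<lambda>v. x *v v) ` W' (Suc i0) j \<subseteq> Z j" using Z j by auto
        qed
        then show ?thesis using True Z Wi0 unfolding P_def by auto
      next
        case False
        then have "m - r < i" using i i0_def by auto
        then have "P W i" using W i by auto
        moreover have "W' i = W i" using False by (simp add: W'_def)
        moreover have "W' (Suc i) = W (Suc i)"
          using False i \<open>m - r < i\<close> i0_def by (simp add: W'_def)
        ultimately show ?thesis unfolding P_def by simp
      qed
    qed
    then show ?case by blast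
  qed
  obtain W where "\<forall>i. m - m < i \<longrightarrow> i \<le> m \<longrightarrow> P W i" using main[of m] by auto
  then have "\<forall>i\<in>{1..m}. P W i" by auto
  then show ?thesis unfolding P_def by blast
qed

end

fun Vsum :: "(nat \<Rightarrow> ('a::field^'d) set) \<Rightarrow> nat \<Rightarrow> ('a^'d) set" where
  "Vsum Wj 0 = {0}"
| "Vsum Wj (Suc i) = ssum (Vsum Wj i) (Wj (Suc i))"

lemma Vsum_mono_j: "(\<forall>t\<in>{1..i}. Wa t \<subseteq> Wb t) \<Longrightarrow> Vsum Wa i \<subseteq> Vsum Wb i"
proof (induction i)
  case 0 then show ?case by simp
next
  case (Suc i)
  then have h: "Vsum Wa i \<subseteq> Vsum Wb i" "Wa (Suc i) \<subseteq> Wb (Suc i)" by auto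
  show ?case
  proof
    fix z assume "z \<in> Vsum Wa (Suc i)"
    then obtain a b where "z = a + b" "a \<in> Vsum Wa i" "b \<in> Wa (Suc i)" by auto
    then show "z \<in> Vsum Wb (Suc i)" using h by auto
  qed
qed

lemma Vsum_sub: "(\<forall>t\<in>{1..i}. vec.subspace (Wj t)) \<Longrightarrow> vec.subspace (Vsum Wj i)"
proof (induction i)
  case 0 then show ?case by simp
next
  case (Suc i)
  then have "vec.subspace (Vsum Wj i)" "vec.subspace (Wj (Suc i))" by auto
  then show ?case using vec.subspace_sums by simp
qed

lemma Vsum_Suc_sup: "0 \<in> Wj (Suc i) \<Longrightarrow> Vsum Wj i \<subseteq> Vsum Wj (Suc i)"
proof
  fix z assume "0 \<in> Wj (Suc i)" "z \<in> Vsum Wj i"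
  moreover have "z = z + 0" by simp
  ultimately show "z \<in> Vsum Wj (Suc i)" unfolding Vsum.simps by blast
qed

lemma W_in_Vsum: "0 \<in> Vsum Wj i \<Longrightarrow> Wj (Suc i) \<subseteq> Vsum Wj (Suc i)"
proof
  fix z assume "0 \<in> Vsum Wj i" "z \<in> Wj (Suc i)"
  moreover have "z = 0 + z" by simp
  ultimately show "z \<in> Vsum Wj (Suc i)" unfolding Vsum.simps by blast
qed

context setting begin

context
  fixes Wj :: "nat \<Rightarrow> ('a^'d) set"
  assumes HW: "\<And>t. t \<in> {1..m} \<Longrightarrow> vec.subspace (Wj t) \<and> Wj t \<subseteq> U t"
    and HX: "\<And>t. t \<in> {2..m} \<Longrightarrow> (\<lambda>v. x *v v) ` Wj t \<subseteq> Wj (t - 1)"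
begin

lemma V_sub: "i \<le> m \<Longrightarrow> vec.subspace (Vsum Wj i)"
  using Vsum_sub[of i Wj] HW by auto

lemma V_0: "i \<le> m \<Longrightarrow> 0 \<in> Vsum Wj i"
  using V_sub vec.subspace_0 by blast

lemma VK: "i \<le> m \<Longrightarrow> Vsum Wj i \<subseteq> K i"
proof (induction i)
  case 0 then show ?case by (simp add: kerpow_0)
next
  case (Suc i)
  have t: "Suc i \<in> {1..m}" using Suc.prems by simp
  have IH: "Vsum Wj i \<subseteq> K (Suc i)" using Suc kerpow_mono_Suc by force
  have "Wj (Suc i) \<subseteq> K (Suc i)" using HW[OF t] U_K[OF t] by blast
  show ?case
  proof
    fix z assume "z \<in> Vsum Wj (Suc i)"
    then obtain a b where ab: "z = a + b" "a \<in> Vsum Wj i" "b \<in> Wj (Suc i)" by auto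
    then have "a \<in> K (Suc i)" "b \<in> K (Suc i)" using IH \<open>Wj (Suc i) \<subseteq> K (Suc i)\<close> by auto
    then show "z \<in> K (Suc i)" using ab(1) vec.subspace_add[OF kerpow_subspace] by simp
  qed
qed

lemma Vdim: "Suc i \<le> m \<Longrightarrow> vec.dim (Vsum Wj (Suc i)) = vec.dim (Vsum Wj i) + vec.dim (Wj (Suc i))"
proof -
  assume si: "Suc i \<le> m"
  have t: "Suc i \<in> {1..m}" using si by simp
  have "Vsum Wj i \<inter> Wj (Suc i) \<subseteq> K i \<inter> U (Suc i)" using VK[of i] si HW[OF t] by auto
  also have "\<dots> \<subseteq> {0}" using U_int[OF t] by auto
  finally have int: "Vsum Wj i \<inter> Wj (Suc i) \<subseteq> {0}" .
  show ?thesis using direct_dim[OF V_sub[of i] _ int] HW[OF t] si by simp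
qed

lemma Vcap_step: "Suc p \<le> m \<Longrightarrow> i \<le> p \<Longrightarrow> Vsum Wj (Suc p) \<inter> K i = Vsum Wj p \<inter> K i"
proof -
  assume sp: "Suc p \<le> m" and ip: "i \<le> p"
  have t: "Suc p \<in> {1..m}" using sp by simp
  show ?thesis
  proof
    show "Vsum Wj (Suc p) \<inter> K i \<subseteq> Vsum Wj p \<inter> K i"
    proof
      fix z assume z: "z \<in> Vsum Wj (Suc p) \<inter> K i"
      then obtain a b where ab: "z = a + b" "a \<in> Vsum Wj p" "b \<in> Wj (Suc p)" by auto
      have aK: "a \<in> K p" using VK[of p] sp ab(2) by auto
      have zK: "z \<in> K p" using z kerpow_mono[OF ip] by blast
      have "b = z - a" using ab(1) by simp
      then have "b \<in> K p" using vec.subspace_diff[OF kerpow_subspace zK aK] by simp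
      moreover have "b \<in> U (Suc p)" using HW[OF t] ab(3) by blast
      ultimately have "b = 0" using U_int[OF t] by auto
      then show "z \<in> Vsum Wj p \<inter> K i" using ab z by simp
    qed
    show "Vsum Wj p \<inter> K i \<subseteq> Vsum Wj (Suc p) \<inter> K i"
      using Vsum_Suc_sup[of Wj p] HW[OF t] vec.subspace_0 by blast
  qed
qed

lemma Vcap: "i \<le> p \<Longrightarrow> p \<le> m \<Longrightarrow> Vsum Wj p \<inter> K i = Vsum Wj i"
proof (induction p rule: dec_induct)
  case base then show ?case using VK[of i] by auto
next
  case (step p)
  then show ?case using Vcap_step[of p i] by simp
qed

lemma Vx: "i \<le> m \<Longrightarrow> (\<lambda>v. x *v v) ` Vsum Wj i \<subseteq> Vsum Wj i"
proof (induction i)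
  case 0 then show ?case by simp
next
  case (Suc i)
  have t: "Suc i \<in> {1..m}" using Suc.prems by simp
  have IH: "(\<lambda>v. x *v v) ` Vsum Wj i \<subseteq> Vsum Wj i" using Suc by simp
  have sup: "Vsum Wj i \<subseteq> Vsum Wj (Suc i)" using Vsum_Suc_sup[of Wj i] HW[OF t] vec.subspace_0 by blast
  show ?case
  proof
    fix z assume "z \<in> (\<lambda>v. x *v v) ` Vsum Wj (Suc i)"
    then obtain a b where ab: "z = x *v (a + b)" "a \<in> Vsum Wj i" "b \<in> Wj (Suc i)" by auto
    have xa: "x *v a \<in> Vsum Wj (Suc i)" using IH ab(2) sup by blast
    have xb: "x *v b \<in> Vsum Wj (Suc i)"
    proof (cases i)
      case 0
      then have "b \<in> U 1" using HW[OF t] ab(3) by auto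
      then have "x *v b = 0" by (rule x_U1)
      then show ?thesis using V_0[OF Suc.prems] by simp
    next
      case (Suc i')
      then have "Suc i \<in> {2..m}" using Suc.prems by simp
      then have "x *v b \<in> Wj i" using HX ab(3) by fastforce
      moreover have "Wj i \<subseteq> Vsum Wj i" using W_in_Vsum[of Wj i'] V_0[of i'] Suc Suc.prems by simp
      ultimately show ?thesis using sup by blast
    qed
    show "z \<in> Vsum Wj (Suc i)"
      using ab(1) xa xb vec.subspace_add[OF V_sub[OF Suc.prems]] by (simp add: matrix_vector_right_distrib)
  qed
qed

lemma Vs_sub: "i \<le> m \<Longrightarrow> (\<lambda>v. s *v v) ` Vsum Wj i \<subseteq> Vsum Wj i"
proof (induction i)
  case 0 then show ?case by simp
next
  case (Suc i)
  have t: "Suc i \<in> {1..m}" using Suc.prems by simp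
  have IH: "(\<lambda>v. s *v v) ` Vsum Wj i \<subseteq> Vsum Wj i" using Suc by simp
  have sW: "(\<lambda>v. s *v v) ` Wj (Suc i) = Wj (Suc i)" using s_W[OF t] HW[OF t] by blast
  show ?case
  proof
    fix z assume "z \<in> (\<lambda>v. s *v v) ` Vsum Wj (Suc i)"
    then obtain a b where ab: "z = s *v (a + b)" "a \<in> Vsum Wj i" "b \<in> Wj (Suc i)" by auto
    have "s *v a \<in> Vsum Wj i" using IH ab(2) by blast
    moreover have "s *v b \<in> Wj (Suc i)" using sW ab(3) by blast
    ultimately show "z \<in> Vsum Wj (Suc i)" using ab(1) by (auto simp: matrix_vector_right_distrib)
  qed
qed

lemma Vs: "i \<le> m \<Longrightarrow> (\<lambda>v. s *v v) ` Vsum Wj i = Vsum Wj i"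
  using inv_image_eq[OF s_inv V_sub Vs_sub] by blast

end
end

lemma L1:
  fixes W V A B :: "('a::field^'d) set"
  assumes "vec.subspace W" "vec.subspace V" "vec.subspace A" "vec.subspace B" "W \<subseteq> V" "A \<subseteq> B"
  shows "vec.dim (W \<inter> B) + vec.dim (V \<inter> A) \<le> vec.dim (V \<inter> B) + vec.dim (W \<inter> A)"
proof -
  have sP: "vec.subspace (W \<inter> B)" using vec.subspace_inter assms by blast
  have sQ: "vec.subspace (V \<inter> A)" using vec.subspace_inter assms by blast
  have g: "vec.dim (ssum (W \<inter> B) (V \<inter> A)) + vec.dim ((W \<inter> B) \<inter> (V \<inter> A)) = vec.dim (W \<inter> B) + vec.dim (V \<inter> A)"
    by (rule vec.dim_sums_Int[OF sP sQ])
  have i: "(W \<inter> B) \<inter> (V \<inter> A) = W \<inter> A" using assms(5,6) by blast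
  have "ssum (W \<inter> B) (V \<inter> A) \<subseteq> V \<inter> B"
  proof
    fix z assume "z \<in> ssum (W \<inter> B) (V \<inter> A)"
    then obtain p q where pq: "z = p + q" "p \<in> W \<inter> B" "q \<in> V \<inter> A" by blast
    then have "p \<in> V" "q \<in> V" "p \<in> B" "q \<in> B" using assms(5,6) by auto
    then show "z \<in> V \<inter> B" using pq(1) vec.subspace_add[OF assms(2)] vec.subspace_add[OF assms(4)] by simp
  qed
  then have "vec.dim (ssum (W \<inter> B) (V \<inter> A)) \<le> vec.dim (V \<inter> B)" by (rule vec.dim_subset)
  then show ?thesis using g i by simp
qed

lemma L2:
  fixes V :: "('a::field^'d) set" and x :: "'a^'d^'d"
  assumes sV: "vec.subspace V" and xV: "(\<lambda>v. x *v v) ` V \<subseteq> V"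
  shows "vec.dim (V \<inter> kerpow x (Suc (Suc i))) + vec.dim (V \<inter> kerpow x i) \<le> 2 * vec.dim (V \<inter> kerpow x (Suc i))"
proof -
  let ?T = "V \<inter> kerpow x (Suc (Suc i))" and ?S = "V \<inter> kerpow x (Suc i)" and ?R = "V \<inter> kerpow x i"
  have sT: "vec.subspace ?T" "vec.subspace ?S" "vec.subspace ?R"
    using vec.subspace_inter sV kerpow_subspace by blast+
  have ST: "?S \<subseteq> ?T" using kerpow_mono_Suc by blast
  obtain Q where Q: "vec.subspace Q" "Q \<subseteq> ?T" "?S \<inter> Q \<subseteq> {0}" "vec.dim ?S + vec.dim Q = vec.dim ?T"
    using compl_exists[OF sT(2) sT(1) ST] by blast
  have inj: "inj_on ((*v) x) (vec.span Q)"
  proof (rule vec.linear_inj_on_iff_eq_0[OF matrix_vector_mul_linear_gen, THEN iffD2])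
    show "\<forall>a\<in>vec.span Q. x *v a = 0 \<longrightarrow> a = 0"
    proof (intro ballI impI)
      fix a assume a: "a \<in> vec.span Q" "x *v a = 0"
      have "vec.span Q = Q" using Q(1) by simp
      then have aQ: "a \<in> Q" using a(1) by blast
      then have "a \<in> V" using Q(2) by blast
      moreover have "a \<in> kerpow x (Suc 0)" using a(2) kerpow_Suc_iff[of a x 0] by (simp add: kerpow_0)
      then have "a \<in> kerpow x (Suc i)" using kerpow_mono[of "Suc 0" "Suc i" x] by auto
      ultimately have "a \<in> ?S \<inter> Q" using aQ by blast
      then show "a = 0" using Q(3) by blast
    qed
  qed simp
  have dxQ: "vec.dim ((*v) x ` Q) = vec.dim Q" by (rule vec.dim_image_eq[OF matrix_vector_mul_linear_gen inj])
  have sxQ: "vec.subspace ((*v) x ` Q)" by (rule vec.subspace_image[OF Q(1)])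
  have xQS: "(*v) x ` Q \<subseteq> ?S"
  proof
    fix z assume "z \<in> (*v) x ` Q"
    then obtain q where q: "q \<in> Q" "z = x *v q" by blast
    then have "q \<in> V" "q \<in> kerpow x (Suc (Suc i))" using Q(2) by auto
    then show "z \<in> ?S" using q(2) xV kerpow_Suc_iff by blast
  qed
  have int: "(*v) x ` Q \<inter> ?R \<subseteq> {0}"
  proof
    fix z assume z: "z \<in> (*v) x ` Q \<inter> ?R"
    then obtain q where q: "q \<in> Q" "z = x *v q" by blast
    then have "q \<in> kerpow x (Suc i)" using z kerpow_Suc_iff by blast
    moreover have "q \<in> V" using q Q(2) by blast
    ultimately have "q \<in> ?S \<inter> Q" using q by blast
    then have "q = 0" using Q(3) by blast
    then show "z \<in> {0}" using q by simp
  qed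
  have "vec.dim (ssum ((*v) x ` Q) ?R) = vec.dim ((*v) x ` Q) + vec.dim ?R"
    by (rule direct_dim[OF sxQ sT(3) int])
  moreover have "ssum ((*v) x ` Q) ?R \<subseteq> ?S"
  proof
    fix z assume "z \<in> ssum ((*v) x ` Q) ?R"
    then obtain p r where pr: "z = p + r" "p \<in> (*v) x ` Q" "r \<in> ?R" by blast
    have "p \<in> ?S" using xQS pr(2) by blast
    moreover have "r \<in> ?S" using pr(3) kerpow_mono_Suc by blast
    ultimately show "z \<in> ?S" using pr(1) vec.subspace_add[OF sT(2)] by simp
  qed
  then have "vec.dim (ssum ((*v) x ` Q) ?R) \<le> vec.dim ?S" by (rule vec.dim_subset)
  ultimately show ?thesis using dxQ Q(4) by simp
qed

lemma m_pos_gen: "nilp_order (x::'a::field^'d^'d) m \<Longrightarrow> 1 \<le> m"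
  using mat1_nz[where 'a='a and 'd='d] unfolding nilp_order_def by (cases m) auto

lemma necessity:
  fixes x :: "'a::field^'d^'d" and \<alpha> :: "nat \<Rightarrow> nat \<Rightarrow> int"
  assumes nil: "nilp_order x m" and VS: "V \<in> stable_flags n k x" and VP: "V \<in> P_alpha n k x m \<alpha>"
  shows "(\<forall>i i' j j'. 1 \<le> i \<longrightarrow> i \<le> i' \<longrightarrow> i' \<le> m \<longrightarrow> 1 \<le> j \<longrightarrow> j \<le> j' \<longrightarrow> j' \<le> n \<longrightarrow>
                0 \<le> \<alpha> i j \<and> \<alpha> i j \<le> \<alpha> i' j') \<and>
            (\<forall>j\<in>{1..n}. \<alpha> m j = int (k j)) \<and>
            (\<forall>i i' j j'. 2 \<le> i \<longrightarrow> i \<le> i' \<longrightarrow> i' \<le> m \<longrightarrow> 1 \<le> j' \<longrightarrow> j' \<le> j \<longrightarrow> j \<le> n \<longrightarrow>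
                \<alpha> i' j' - \<alpha> (i' - 1) j' \<le> \<alpha> i j - \<alpha> (i - 1) j \<and>
                \<alpha> i j - \<alpha> (i - 1) j \<le> \<alpha> 1 j) \<and>
            (\<forall>i j. 2 \<le> i \<longrightarrow> i \<le> m \<longrightarrow> 1 \<le> j \<longrightarrow> j \<le> n \<longrightarrow>
                \<alpha> i j - \<alpha> (i - 1) j \<le> int (vec.dim (kerpow x i)) - int (vec.dim (kerpow x (i - 1)))) \<and>
            (\<forall>j\<in>{1..n}. \<alpha> 1 j \<le> int (vec.dim (kerpow x 1)))"
proof -
  have VF: "V \<in> flag_variety n k" using VS by (simp add: stable_flags_def)
  have Vsub: "\<And>j. j \<in> {1..n} \<Longrightarrow> vec.subspace (V j)" using VF by (simp add: flag_variety_def)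
  have Vdim: "\<And>j. j \<in> {1..n} \<Longrightarrow> vec.dim (V j) = k j" using VF by (simp add: flag_variety_def)
  have Vx: "\<And>j. j \<in> {1..n} \<Longrightarrow> (\<lambda>v. x *v v) ` V j \<subseteq> V j" using VS by (simp add: stable_flags_def)
  have Vstep: "\<And>j. 1 \<le> j \<Longrightarrow> j < n \<Longrightarrow> V j \<subseteq> V (Suc j)" using VF by (simp add: flag_variety_def)
  have Vnest: "\<And>j j'. 1 \<le> j \<Longrightarrow> j \<le> j' \<Longrightarrow> j' \<le> n \<Longrightarrow> V j \<subseteq> V j'"
  proof -
    fix j j' :: nat assume j: "1 \<le> j" and jj: "j \<le> j'" and j'n: "j' \<le> n"
    from jj j'n show "V j \<subseteq> V j'"
    proof (induction j' rule: dec_induct)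
      case base then show ?case by simp
    next
      case (step p)
      then have "V p \<subseteq> V (Suc p)" using Vstep j by simp
      then show ?case using step by simp
    qed
  qed
  have alpha: "\<And>i j. i \<in> {1..m} \<Longrightarrow> j \<in> {1..n} \<Longrightarrow> \<alpha> i j = int (vec.dim (V j \<inter> kerpow x i))"
    using VP by (simp add: P_alpha_def)
  define d where "d i j = int (vec.dim (V j \<inter> kerpow x i))" for i j
  have d0: "d 0 j = 0" for j by (simp add: d_def kerpow_0)
  have Km: "kerpow x m = UNIV" using nil kerpow_full unfolding nilp_order_def by blast
  have mono_i: "\<And>i j. j \<in> {1..n} \<Longrightarrow> d (Suc (Suc i)) j - d (Suc i) j \<le> d (Suc i) j - d i j"
  proof -
    fix i j assume j: "j \<in> {1..n}"
    have "vec.dim (V j \<inter> kerpow x (Suc (Suc i))) + vec.dim (V j \<inter> kerpow x i) \<le> 2 * vec.dim (V j \<inter> kerpow x (Suc i))"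
      by (rule L2[OF Vsub[OF j] Vx[OF j]])
    then show "d (Suc (Suc i)) j - d (Suc i) j \<le> d (Suc i) j - d i j" unfolding d_def by simp
  qed
  have chain: "\<And>i i' j. j \<in> {1..n} \<Longrightarrow> 1 \<le> i \<Longrightarrow> i \<le> i' \<Longrightarrow> d i' j - d (i' - 1) j \<le> d i j - d (i - 1) j"
  proof -
    fix i i' j :: nat assume j: "j \<in> {1..n}" and i: "1 \<le> i" and ii: "i \<le> i'"
    from ii show "d i' j - d (i' - 1) j \<le> d i j - d (i - 1) j"
    proof (induction i' rule: dec_induct)
      case base then show ?case by simp
    next
      case (step p)
      then obtain p' where p': "p = Suc p'" using i by (cases p) auto
      have "d (Suc p) j - d (Suc p - 1) j \<le> d p j - d (p - 1) j" using mono_i[OF j, of p'] p' by simp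
      then show ?case using step by simp
    qed
  qed
  have mono_j: "\<And>i j j'. 1 \<le> i \<Longrightarrow> 1 \<le> j' \<Longrightarrow> j' \<le> j \<Longrightarrow> j \<le> n \<Longrightarrow>
        d i j' - d (i - 1) j' \<le> d i j - d (i - 1) j"
  proof -
    fix i j j' :: nat assume i: "1 \<le> i" and j: "1 \<le> j'" "j' \<le> j" "j \<le> n"
    have "vec.dim (V j' \<inter> kerpow x i) + vec.dim (V j \<inter> kerpow x (i - 1))
          \<le> vec.dim (V j \<inter> kerpow x i) + vec.dim (V j' \<inter> kerpow x (i - 1))"
      by (rule L1[OF Vsub Vsub kerpow_subspace kerpow_subspace Vnest[OF j] kerpow_mono]) (use j in auto)
    then show "d i j' - d (i - 1) j' \<le> d i j - d (i - 1) j" unfolding d_def by simp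
  qed
  have bound: "\<And>i j. 1 \<le> i \<Longrightarrow> j \<in> {1..n} \<Longrightarrow>
        d i j - d (i - 1) j \<le> int (vec.dim (kerpow x i)) - int (vec.dim (kerpow x (i - 1)))"
  proof -
    fix i j :: nat assume i: "1 \<le> i" and j: "j \<in> {1..n}"
    have "vec.dim (V j \<inter> kerpow x i) + vec.dim (UNIV \<inter> kerpow x (i - 1))
          \<le> vec.dim (UNIV \<inter> kerpow x i) + vec.dim (V j \<inter> kerpow x (i - 1))"
      by (rule L1[OF Vsub[OF j] vec.subspace_UNIV kerpow_subspace kerpow_subspace _ kerpow_mono]) auto
    then show "d i j - d (i - 1) j \<le> int (vec.dim (kerpow x i)) - int (vec.dim (kerpow x (i - 1)))"
      unfolding d_def by simp
  qed
  show ?thesis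
  proof (intro conjI allI impI ballI)
    fix i i' j j' :: nat
    assume h: "1 \<le> i" "i \<le> i'" "i' \<le> m" "1 \<le> j" "j \<le> j'" "j' \<le> n"
    show "0 \<le> \<alpha> i j" using alpha[of i j] h by simp
    have "V j \<inter> kerpow x i \<subseteq> V j' \<inter> kerpow x i'" using Vnest[of j j'] kerpow_mono[of i i' x] h by auto
    then have "vec.dim (V j \<inter> kerpow x i) \<le> vec.dim (V j' \<inter> kerpow x i')" by (rule vec.dim_subset)
    then show "\<alpha> i j \<le> \<alpha> i' j'" using alpha[of i j] alpha[of i' j'] h by simp
  next
    fix j :: nat assume j: "j \<in> {1..n}"
    have m1: "1 \<le> m" using m_pos_gen[OF nil] .
    show "\<alpha> m j = int (k j)" using alpha[of m j] j Km Vdim[OF j] m1 by simp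
  next
    fix i i' j j' :: nat
    assume h: "2 \<le> i" "i \<le> i'" "i' \<le> m" "1 \<le> j'" "j' \<le> j" "j \<le> n"
    have jn: "j \<in> {1..n}" "j' \<in> {1..n}" using h by auto
    have r: "i' - 1 \<in> {1..m}" "i - 1 \<in> {1..m}" "i' \<in> {1..m}" "i \<in> {1..m}" using h by auto
    have e1: "\<alpha> i' j' - \<alpha> (i' - 1) j' = d i' j' - d (i' - 1) j'"
      using alpha[OF r(3) jn(2)] alpha[OF r(1) jn(2)] unfolding d_def by simp
    have e2: "\<alpha> i j - \<alpha> (i - 1) j = d i j - d (i - 1) j"
      using alpha[OF r(4) jn(1)] alpha[OF r(2) jn(1)] unfolding d_def by simp
    have e3: "\<alpha> 1 j = d 1 j - d (1 - 1) j" using alpha[of 1 j] h d0 unfolding d_def by simp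
    have "d i' j' - d (i' - 1) j' \<le> d i' j - d (i' - 1) j" using mono_j[of i' j' j] h by simp
    also have "\<dots> \<le> d i j - d (i - 1) j" using chain[OF jn(1), of i i'] h by simp
    finally show "\<alpha> i' j' - \<alpha> (i' - 1) j' \<le> \<alpha> i j - \<alpha> (i - 1) j" using e1 e2 by simp
    have "d i j - d (i - 1) j \<le> d 1 j - d (1 - 1) j" using chain[OF jn(1), of 1 i] h by simp
    then show "\<alpha> i j - \<alpha> (i - 1) j \<le> \<alpha> 1 j" using e2 e3 by simp
  next
    fix i j :: nat assume h: "2 \<le> i" "i \<le> m" "1 \<le> j" "j \<le> n"
    have r: "i - 1 \<in> {1..m}" "i \<in> {1..m}" "j \<in> {1..n}" using h by auto
    have e2: "\<alpha> i j - \<alpha> (i - 1) j = d i j - d (i - 1) j"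
      using alpha[OF r(2) r(3)] alpha[OF r(1) r(3)] unfolding d_def by simp
    show "\<alpha> i j - \<alpha> (i - 1) j \<le> int (vec.dim (kerpow x i)) - int (vec.dim (kerpow x (i - 1)))"
      using e2 bound[of i j] h by simp
  next
    fix j :: nat assume j: "j \<in> {1..n}"
    have m1: "1 \<le> m" using m_pos_gen[OF nil] .
    have "vec.dim (V j \<inter> kerpow x 1) \<le> vec.dim (kerpow x 1)" by (rule vec.dim_subset) blast
    then show "\<alpha> 1 j \<le> int (vec.dim (kerpow x 1))" using alpha[of 1 j] j m1 by simp
  qed
qed

context setting begin

lemma column_dim:
  fixes Wj :: "nat \<Rightarrow> ('a^'d) set"
  assumes HW: "\<And>t. t \<in> {1..m} \<Longrightarrow> vec.subspace (Wj t) \<and> Wj t \<subseteq> U t"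
    and HX: "\<And>t. t \<in> {2..m} \<Longrightarrow> (\<lambda>v. x *v v) ` Wj t \<subseteq> Wj (t - 1)"
    and HD: "\<And>t. t \<in> {1..m} \<Longrightarrow> int (vec.dim (Wj t)) = \<alpha> t j - (if t = 1 then 0 else \<alpha> (t - 1) j)"
  shows "i \<in> {1..m} \<Longrightarrow> int (vec.dim (Vsum Wj i)) = \<alpha> i j"
proof (induction i)
  case 0 then show ?case by simp
next
  case (Suc i)
  have sm: "Suc i \<le> m" using Suc.prems by simp
  have d: "vec.dim (Vsum Wj (Suc i)) = vec.dim (Vsum Wj i) + vec.dim (Wj (Suc i))"
    by (rule Vdim[OF HW HX sm])
  show ?case
  proof (cases "i = 0")
    case True
    then show ?thesis using d HD[of 1] Suc.prems by simp
  next
    case False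
    then have "int (vec.dim (Vsum Wj i)) = \<alpha> i j" using Suc by simp
    then show ?thesis using d HD[of "Suc i"] Suc.prems False by simp
  qed
qed

lemma sufficiency:
  fixes n :: nat and k :: "nat \<Rightarrow> nat" and \<alpha> :: "nat \<Rightarrow> nat \<Rightarrow> int"
  assumes c1: "\<forall>i i' j j'. 1 \<le> i \<longrightarrow> i \<le> i' \<longrightarrow> i' \<le> m \<longrightarrow> 1 \<le> j \<longrightarrow> j \<le> j' \<longrightarrow> j' \<le> n \<longrightarrow>
                0 \<le> \<alpha> i j \<and> \<alpha> i j \<le> \<alpha> i' j'"
    and cm: "\<forall>j\<in>{1..n}. \<alpha> m j = int (k j)"
    and c2: "\<forall>i i' j j'. 2 \<le> i \<longrightarrow> i \<le> i' \<longrightarrow> i' \<le> m \<longrightarrow> 1 \<le> j' \<longrightarrow> j' \<le> j \<longrightarrow> j \<le> n \<longrightarrow>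
                \<alpha> i' j' - \<alpha> (i' - 1) j' \<le> \<alpha> i j - \<alpha> (i - 1) j \<and>
                \<alpha> i j - \<alpha> (i - 1) j \<le> \<alpha> 1 j"
    and c3: "\<forall>i j. 2 \<le> i \<longrightarrow> i \<le> m \<longrightarrow> 1 \<le> j \<longrightarrow> j \<le> n \<longrightarrow>
                \<alpha> i j - \<alpha> (i - 1) j \<le> int (vec.dim (kerpow x i)) - int (vec.dim (kerpow x (i - 1)))"
    and c4: "\<forall>j\<in>{1..n}. \<alpha> 1 j \<le> int (vec.dim (kerpow x 1))"
  shows "\<exists>V. V \<in> fixed_flags s (stable_flags n k x) \<and> V \<in> P_alpha n k x m \<alpha>"
proof -
  have c2': "\<And>i i' j j'. 2 \<le> i \<Longrightarrow> i \<le> i' \<Longrightarrow> i' \<le> m \<Longrightarrow> 1 \<le> j' \<Longrightarrow> j' \<le> j \<Longrightarrow> j \<le> n \<Longrightarrow>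
                \<alpha> i' j' - \<alpha> (i' - 1) j' \<le> \<alpha> i j - \<alpha> (i - 1) j \<and>
                \<alpha> i j - \<alpha> (i - 1) j \<le> \<alpha> 1 j" using c2 by blast
  have c1': "\<And>i i' j j'. 1 \<le> i \<Longrightarrow> i \<le> i' \<Longrightarrow> i' \<le> m \<Longrightarrow> 1 \<le> j \<Longrightarrow> j \<le> j' \<Longrightarrow> j' \<le> n \<Longrightarrow>
                0 \<le> \<alpha> i j \<and> \<alpha> i j \<le> \<alpha> i' j'" using c1 by blast
  define b where "b i j = \<alpha> i j - (if i = 1 then 0 else \<alpha> (i - 1) j)" for i j
  define a where "a i j = nat (b i j)" for i j
  have bnn: "\<And>i j. i \<in> {1..m} \<Longrightarrow> j \<in> {1..n} \<Longrightarrow> 0 \<le> b i j"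
  proof -
    fix i j assume i: "i \<in> {1..m}" and j: "j \<in> {1..n}"
    show "0 \<le> b i j"
    proof (cases "i = 1")
      case True then show ?thesis using c1 j i by (auto simp: b_def)
    next
      case False
      then have "\<alpha> (i - 1) j \<le> \<alpha> i j" using c1 i j by auto
      then show ?thesis using False by (simp add: b_def)
    qed
  qed
  have ab: "\<And>i j. i \<in> {1..m} \<Longrightarrow> j \<in> {1..n} \<Longrightarrow> int (a i j) = b i j"
    using bnn by (simp add: a_def)
  have A1: "\<And>i j. i \<in> {1..m} \<Longrightarrow> j \<in> {1..n} \<Longrightarrow> a i j \<le> vec.dim (U i)"
  proof -
    fix i j assume i: "i \<in> {1..m}" and j: "j \<in> {1..n}"
    have dU: "int (vec.dim (U i)) = int (vec.dim (K i)) - int (vec.dim (K (i - 1)))"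
      using dim_U[OF i] by simp
    have "b i j \<le> int (vec.dim (U i))"
    proof (cases "i = 1")
      case True
      then show ?thesis using c4 j dU by (simp add: b_def kerpow_0)
    next
      case False
      then show ?thesis using c3 i j dU by (auto simp: b_def)
    qed
    then show "a i j \<le> vec.dim (U i)" using ab[OF i j] by simp
  qed
  have A2: "\<And>i j. i \<in> {1..m} \<Longrightarrow> Suc i \<le> m \<Longrightarrow> j \<in> {1..n} \<Longrightarrow> a (Suc i) j \<le> a i j"
  proof -
    fix i j assume i: "i \<in> {1..m}" and si: "Suc i \<le> m" and j: "j \<in> {1..n}"
    have si': "Suc i \<in> {1..m}" using si by simp
    have "b (Suc i) j \<le> b i j"
    proof (cases "i = 1")
      case True
      then show ?thesis using c2'[of 2 2 j j] si j by (simp add: b_def numeral_2_eq_2)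
    next
      case False
      then show ?thesis using c2'[of i "Suc i" j j] si i j by (simp add: b_def)
    qed
    then show "a (Suc i) j \<le> a i j" using ab[OF i j] ab[OF si' j] by simp
  qed
  have A3: "\<And>i j. i \<in> {1..m} \<Longrightarrow> 1 \<le> j \<Longrightarrow> j < n \<Longrightarrow> a i j \<le> a i (Suc j)"
  proof -
    fix i j assume i: "i \<in> {1..m}" and j: "1 \<le> j" "j < n"
    have jj: "j \<in> {1..n}" "Suc j \<in> {1..n}" using j by auto
    have "b i j \<le> b i (Suc j)"
    proof (cases "i = 1")
      case True
      then show ?thesis using c1'[of 1 1 j "Suc j"] i j by (simp add: b_def)
    next
      case False
      have i2: "2 \<le> i" using False i by auto
      have h: "\<alpha> i j - \<alpha> (i - 1) j \<le> \<alpha> i (Suc j) - \<alpha> (i - 1) (Suc j)"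
        by (rule conjunct1[OF c2'[of i i j "Suc j"]]) (use i2 i j in auto)
      then show ?thesis using False by (simp add: b_def)
    qed
    then show "a i j \<le> a i (Suc j)" using ab[OF i jj(1)] ab[OF i jj(2)] by simp
  qed
  obtain W where W: "\<forall>i\<in>{1..m}. \<forall>j\<in>{1..n}. vec.subspace (W i j) \<and> W i j \<subseteq> U i \<and> vec.dim (W i j) = a i j
            \<and> (j < n \<longrightarrow> W i j \<subseteq> W i (Suc j))
            \<and> (i < m \<longrightarrow> (\<lambda>v. x *v v) ` W (Suc i) j \<subseteq> W i j)"
    using rows_exist[where a=a and n=n, OF A1 A2 A3] by blast
  have HW: "\<And>j t. j \<in> {1..n} \<Longrightarrow> t \<in> {1..m} \<Longrightarrow> vec.subspace (W t j) \<and> W t j \<subseteq> U t"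
    using W by blast
  have HX: "\<And>j t. j \<in> {1..n} \<Longrightarrow> t \<in> {2..m} \<Longrightarrow> (\<lambda>v. x *v v) ` W t j \<subseteq> W (t - 1) j"
  proof -
    fix j t assume j: "j \<in> {1..n}" and t: "t \<in> {2..m}"
    have t1: "t - 1 \<in> {1..m}" "t - 1 < m" using t by auto
    have "Suc (t - 1) = t" using t by auto
    then show "(\<lambda>v. x *v v) ` W t j \<subseteq> W (t - 1) j" using W t1 j by metis
  qed
  have HD: "\<And>j t. j \<in> {1..n} \<Longrightarrow> t \<in> {1..m} \<Longrightarrow>
      int (vec.dim (W t j)) = \<alpha> t j - (if t = 1 then 0 else \<alpha> (t - 1) j)"
    using W ab by (simp add: b_def)
  have Wn: "\<And>j t. 1 \<le> j \<Longrightarrow> j < n \<Longrightarrow> t \<in> {1..m} \<Longrightarrow> W t j \<subseteq> W t (Suc j)"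
    using W by auto
  define V where "V j = (if j \<in> {1..n} then Vsum (\<lambda>i. W i j) m else {0})" for j
  have cd: "\<And>j i. j \<in> {1..n} \<Longrightarrow> i \<in> {1..m} \<Longrightarrow> int (vec.dim (Vsum (\<lambda>i. W i j) i)) = \<alpha> i j"
  proof -
    fix j i assume j: "j \<in> {1..n}" and i: "i \<in> {1..m}"
    show "int (vec.dim (Vsum (\<lambda>i. W i j) i)) = \<alpha> i j"
      by (rule column_dim[where Wj="\<lambda>i. W i j" and \<alpha>=\<alpha> and j=j, OF HW[OF j] HX[OF j] HD[OF j] i])
  qed
  have m1: "m \<in> {1..m}" using m_pos by simp
  have VF: "V \<in> flag_variety n k"
    unfolding flag_variety_def
  proof (intro CollectI conjI ballI allI impI)
    fix j assume j: "j \<in> {1..n}"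
    show "vec.subspace (V j)" using V_sub[where Wj="\<lambda>i. W i j", OF HW[OF j] HX[OF j], of m] j by (simp add: V_def)
    show "vec.dim (V j) = k j" using cd[OF j m1] cm j by (simp add: V_def)
  next
    fix j assume j: "1 \<le> j \<and> j < n"
    have "Vsum (\<lambda>i. W i j) m \<subseteq> Vsum (\<lambda>i. W i (Suc j)) m"
      by (rule Vsum_mono_j) (use Wn j in auto)
    then show "V j \<subseteq> V (Suc j)" using j by (simp add: V_def)
  next
    fix j assume "j \<notin> {1..n}"
    then show "V j = {0}" unfolding V_def by (simp only: if_False)
  qed
  have VS: "V \<in> stable_flags n k x"
    unfolding stable_flags_def
  proof (intro CollectI conjI ballI VF)
    fix j assume j: "j \<in> {1..n}"
    show "(\<lambda>v. x *v v) ` V j \<subseteq> V j" using Vx[where Wj="\<lambda>i. W i j", OF HW[OF j] HX[OF j], of m] j by (simp add: V_def)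
  qed
  have VFix: "V \<in> fixed_flags s (stable_flags n k x)"
    unfolding fixed_flags_def
  proof (intro CollectI conjI allI VS)
    fix j show "(\<lambda>v. s *v v) ` V j = V j"
    proof (cases "j \<in> {1..n}")
      case True then show ?thesis using Vs[where Wj="\<lambda>i. W i j", OF HW[OF True] HX[OF True], of m] by (simp add: V_def)
    next
      case False
      then have "V j = {0}" unfolding V_def by (simp only: if_False)
      then show ?thesis by simp
    qed
  qed
  have VP: "V \<in> P_alpha n k x m \<alpha>"
    unfolding P_alpha_def
  proof (intro CollectI conjI ballI VF)
    fix i j assume i: "i \<in> {1..m}" and j: "j \<in> {1..n}"
    have "Vsum (\<lambda>i. W i j) m \<inter> K i = Vsum (\<lambda>i. W i j) i"
      by (rule Vcap[where Wj="\<lambda>i. W i j", OF HW[OF j] HX[OF j]]) (use i j in auto)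
    then show "int (vec.dim (V j \<inter> K i)) = \<alpha> i j" using cd[OF j i] j by (simp add: V_def)
  qed
  show ?thesis using VFix VP by blast
qed

end

theorem mainTheorem5:
  fixes x s :: "'a::{alg_closed_field, field_char_0}^'d^'d"
    and n m :: nat and k :: "nat \<Rightarrow> nat" and q :: 'a
    and \<alpha> :: "nat \<Rightarrow> nat \<Rightarrow> int"
  assumes k_mono: "\<And>j j'. 1 \<le> j \<Longrightarrow> j \<le> j' \<Longrightarrow> j' \<le> n \<Longrightarrow> k j \<le> k j'"
    and k_le: "\<And>j. j \<in> {1..n} \<Longrightarrow> k j \<le> CARD('d)"
    and nil: "nilp_order x m"
    and s_P: "s \<in> parabolic_of x"
    and s_ss: "semisimple_elt s"
    and s_levi: "levi_subgroup_of x m (centralizer s)"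
    and q_nz: "q \<noteq> 0"
    and s_x: "s ** x ** matrix_inv s = (\<chi> i j. q * x $ i $ j)"
  shows "(stable_flags n k x \<inter> P_alpha n k x m \<alpha> \<noteq> {} \<longleftrightarrow>
           fixed_flags s (stable_flags n k x) \<inter> P_alpha n k x m \<alpha> \<noteq> {})
       \<and> (stable_flags n k x \<inter> P_alpha n k x m \<alpha> \<noteq> {} \<longleftrightarrow>
           ((\<forall>i i' j j'. 1 \<le> i \<longrightarrow> i \<le> i' \<longrightarrow> i' \<le> m \<longrightarrow> 1 \<le> j \<longrightarrow> j \<le> j' \<longrightarrow> j' \<le> n \<longrightarrow>
                0 \<le> \<alpha> i j \<and> \<alpha> i j \<le> \<alpha> i' j') \<and>
            (\<forall>j\<in>{1..n}. \<alpha> m j = int (k j)) \<and>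
            (\<forall>i i' j j'. 2 \<le> i \<longrightarrow> i \<le> i' \<longrightarrow> i' \<le> m \<longrightarrow> 1 \<le> j' \<longrightarrow> j' \<le> j \<longrightarrow> j \<le> n \<longrightarrow>
                \<alpha> i' j' - \<alpha> (i' - 1) j' \<le> \<alpha> i j - \<alpha> (i - 1) j \<and>
                \<alpha> i j - \<alpha> (i - 1) j \<le> \<alpha> 1 j) \<and>
            (\<forall>i j. 2 \<le> i \<longrightarrow> i \<le> m \<longrightarrow> 1 \<le> j \<longrightarrow> j \<le> n \<longrightarrow>
                \<alpha> i j - \<alpha> (i - 1) j \<le> int (vec.dim (kerpow x i)) - int (vec.dim (kerpow x (i - 1)))) \<and>
            (\<forall>j\<in>{1..n}. \<alpha> 1 j \<le> int (vec.dim (kerpow x 1)))))"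
proof -
  have s_inv: "invertible s" using s_ss by (simp add: semisimple_elt_def)
  have s_K: "\<And>i. (\<lambda>v. s *v v) ` kerpow x i = kerpow x i" using s_P by (simp add: parabolic_of_def)
  have s_xv: "\<And>v. s *v (x *v v) = q *s (x *v (s *v v))" by (rule s_x_vec[OF s_inv s_x])
  obtain U where U: "\<forall>i\<in>{1..m}. vec.subspace (U i) \<and> U i \<inter> kerpow x (i - 1) = {0} \<and>
                    {u + w | u w. u \<in> U i \<and> w \<in> kerpow x (i - 1)} = kerpow x i"
    and L: "centralizer s = {g \<in> GLA. \<forall>i\<in>{1..m}. (\<lambda>v. g *v v) ` U i = U i}"
    using s_levi unfolding levi_subgroup_of_def by blast
  interpret S: setting x s m U q
    by (unfold_locales) (use nil U L s_inv s_K s_xv in auto)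
  let ?A = "stable_flags n k x \<inter> P_alpha n k x m \<alpha> \<noteq> {}"
  let ?B = "fixed_flags s (stable_flags n k x) \<inter> P_alpha n k x m \<alpha> \<noteq> {}"
  let ?C = "(\<forall>i i' j j'. 1 \<le> i \<longrightarrow> i \<le> i' \<longrightarrow> i' \<le> m \<longrightarrow> 1 \<le> j \<longrightarrow> j \<le> j' \<longrightarrow> j' \<le> n \<longrightarrow>
                0 \<le> \<alpha> i j \<and> \<alpha> i j \<le> \<alpha> i' j') \<and>
            (\<forall>j\<in>{1..n}. \<alpha> m j = int (k j)) \<and>
            (\<forall>i i' j j'. 2 \<le> i \<longrightarrow> i \<le> i' \<longrightarrow> i' \<le> m \<longrightarrow> 1 \<le> j' \<longrightarrow> j' \<le> j \<longrightarrow> j \<le> n \<longrightarrow>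
                \<alpha> i' j' - \<alpha> (i' - 1) j' \<le> \<alpha> i j - \<alpha> (i - 1) j \<and>
                \<alpha> i j - \<alpha> (i - 1) j \<le> \<alpha> 1 j) \<and>
            (\<forall>i j. 2 \<le> i \<longrightarrow> i \<le> m \<longrightarrow> 1 \<le> j \<longrightarrow> j \<le> n \<longrightarrow>
                \<alpha> i j - \<alpha> (i - 1) j \<le> int (vec.dim (kerpow x i)) - int (vec.dim (kerpow x (i - 1)))) \<and>
            (\<forall>j\<in>{1..n}. \<alpha> 1 j \<le> int (vec.dim (kerpow x 1)))"
  have AC: "?A \<Longrightarrow> ?C"
  proof -
    assume ?A
    then obtain V where "V \<in> stable_flags n k x" "V \<in> P_alpha n k x m \<alpha>" by blast
    then show ?C by (rule necessity[OF nil])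
  qed
  have CB: "?C \<Longrightarrow> ?B"
  proof -
    assume c: ?C
    obtain V where "V \<in> fixed_flags s (stable_flags n k x)" "V \<in> P_alpha n k x m \<alpha>"
      using S.sufficiency[where n=n and k=k and \<alpha>=\<alpha>] c by blast
    then show ?B by blast
  qed
  have BA: "?B \<Longrightarrow> ?A"
    unfolding fixed_flags_def by blast
  have e1: "?A = ?B"
  proof
    assume a: ?A
    show ?B by (rule CB[OF AC[OF a]])
  next
    assume ?B
    then show ?A by (rule BA)
  qed
  have e2: "?A = ?C"
  proof
    assume a: ?A
    show ?C by (rule AC[OF a])
  next
    assume ?C
    then show ?A by (rule BA[OF CB])
  qed
  show ?thesis by (rule conjI[OF e1 e2])
qed

end
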